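(* Let $p\in[1,\infty)$, $I=[0,1]$, $f\in L^p(I)$, $n\in\mathbb{N}$, and let $0=x_0<x_1<\dots<x_N=1$. Let $u_i(x)=a_ix+b_i$, $i\in\mathbb{N}_N$, be the affine maps with $u_i(0)=x_{i-1}$, $u_i(1)=x_i$. Let $\alpha_i\in L^\infty(I)$, $i\in\mathbb{N}_N$, satisfy $\Lambda:=\left(\sum_{i=1}^Na_i\|\alpha_i\|_\infty^p\right)^{1/p}<1$. Define $T:L^p(I)\to L^p(I)$ by \[ Tg=f+\sum_{i=1}^N(\alpha_i\circ u_i^{-1})\,\big((g-\widehat M_nf)\circ u_i^{-1}\big)\,\chi_{u_i(I)}. \] Then $T$ is a contraction on $L^p(I)$ with Lipschitz constant $\Lambda$; its unique fixed point $f^\alpha_n\in L^p(I)$ satisfies $f^\alpha_n=f+\sum_{i=1}^N(\alpha_i\circ u_i^{-1})((f^\alpha_n-\widehat M_nf)\circ u_i^{-1})\chi_{u_i(I)}$; and the map $L^p(I)\to L^p(I)$, $f\mapsto f^\alpha_n$, is a bounded linear operator.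
   Context: The integral MKZ operator is $\widehat M_nf(x)=\int_0^1H_n(x,s)f(s)\,ds$, where $H_n(x,s)=\sum_{k=0}^\infty\widehat m_{nk}(x)\chi_{I_k}(s)$, $\widehat m_{nk}(x)=(n+1)\binom{k+n+1}{k}x^k(1-x)^n$, $I_k=\left[\frac{k}{k+n},\frac{k+1}{k+n+1}\right]$, and $\chi_S$ is the indicator function of $S$. *)

theory Defs
  imports "HOL-Analysis.Analysis" "HOL-Probability.Essential_Supremum"
begin

abbreviation LI :: "real measure" where
  "LI \<equiv> lebesgue_on {0..1}"

text \<open>Membership in L^p(I) (functions are represented by representatives real => real;
  only values on [0,1] matter, equality in L^p is a.e. equality on I).\<close>
definition Lp_mem :: "real \<Rightarrow> (real \<Rightarrow> real) \<Rightarrow> bool" where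
  "Lp_mem p g \<longleftrightarrow> g \<in> borel_measurable LI \<and> integrable LI (\<lambda>x. \<bar>g x\<bar> powr p)"

definition Lp_norm :: "real \<Rightarrow> (real \<Rightarrow> real) \<Rightarrow> real" where
  "Lp_norm p g = (\<integral>x. \<bar>g x\<bar> powr p \<partial>LI) powr (1 / p)"

definition Linf_mem :: "(real \<Rightarrow> real) \<Rightarrow> bool" where
  "Linf_mem g \<longleftrightarrow> g \<in> borel_measurable LI \<and> esssup LI (\<lambda>x. ereal \<bar>g x\<bar>) < \<infinity>"

definition Linf_norm :: "(real \<Rightarrow> real) \<Rightarrow> real" where
  "Linf_norm g = real_of_ereal (esssup LI (\<lambda>x. ereal \<bar>g x\<bar>))"

definition mhat :: "nat \<Rightarrow> nat \<Rightarrow> real \<Rightarrow> real" where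
  "mhat n k x = real (n + 1) * real ((k + n + 1) choose k) * x ^ k * (1 - x) ^ n"

definition Ik :: "nat \<Rightarrow> nat \<Rightarrow> real set" where
  "Ik n k = {real k / real (k + n) .. real (k + 1) / real (k + n + 1)}"

definition Hn :: "nat \<Rightarrow> real \<Rightarrow> real \<Rightarrow> real" where
  "Hn n x s = (\<Sum>k. mhat n k x * indicator (Ik n k) s)"

definition Mhat :: "nat \<Rightarrow> (real \<Rightarrow> real) \<Rightarrow> real \<Rightarrow> real" where
  "Mhat n f x = (\<integral>s. Hn n x s * f s \<partial>LI)"

text \<open>The operator T (depending on f), with u_i t = a_i t + b_i and
  u_i^{-1} y = (y - b_i) / a_i.\<close>
definition Top :: "nat \<Rightarrow> nat \<Rightarrow> (nat \<Rightarrow> real) \<Rightarrow> (nat \<Rightarrow> real) \<Rightarrow> (nat \<Rightarrow> real \<Rightarrow> real)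
    \<Rightarrow> (real \<Rightarrow> real) \<Rightarrow> (real \<Rightarrow> real) \<Rightarrow> real \<Rightarrow> real" where
  "Top n N a b alpha f g y = f y + (\<Sum>i=1..N.
      alpha i ((y - b i) / a i) * (g ((y - b i) / a i) - Mhat n f ((y - b i) / a i))
      * indicator ((\<lambda>t. a i * t + b i) ` {0..1}) y)"

end

theory Submission
  imports Defs "HOL-Probability.Probability_Measure"
begin

lemma powr_convex_ineq:
  fixes p u v l :: real
  assumes p: "p \<ge> 1" and u: "u \<ge> 0" and v: "v \<ge> 0" and l0: "0 \<le> l" and l1: "l \<le> 1"
  shows "(l * u + (1 - l) * v) powr p \<le> l * u powr p + (1 - l) * v powr p"
proof (cases "u > 0 \<and> v > 0")
  case True
  have "convex_on {0<..} (\<lambda>x. x powr p)" by (rule powr_convex[OF p])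
  from convex_onD[OF this, of "1 - l" u v] show ?thesis using True l0 l1
    by (auto simp: algebra_simps)
next
  case False
  have key: "(l * w) powr p \<le> l * w powr p" if "0 \<le> w" "0 \<le> l" "l \<le> 1" for l w :: real
  proof -
    have "(l * w) powr p = l powr p * w powr p" using that by (simp add: powr_mult)
    also have "l powr p \<le> l" 
    proof (cases "l = 0")
      case False
      then have "l powr p \<le> l powr 1" using that p by (intro powr_mono') auto
      then show ?thesis using False that by simp
    qed (use p in simp)
    then have "l powr p * w powr p \<le> l * w powr p" by (intro mult_right_mono) auto
    finally show ?thesis .
  qed
  show ?thesis
  proof (cases "u = 0")
    case True
    then show ?thesis using key[of v "1 - l"] v l0 l1 p by simp
  next
    case False
    then have "v = 0" using \<open>\<not> (u > 0 \<and> v > 0)\<close> u v by auto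
    then show ?thesis using key[of u l] u l0 l1 p by simp
  qed
qed

lemma abs_powr_convex_ineq:
  fixes p x y l :: real
  assumes p: "p \<ge> 1" and l0: "0 \<le> l" and l1: "l \<le> 1"
  shows "\<bar>l * x + (1 - l) * y\<bar> powr p \<le> l * \<bar>x\<bar> powr p + (1 - l) * \<bar>y\<bar> powr p"
proof -
  have "\<bar>l * x + (1 - l) * y\<bar> \<le> l * \<bar>x\<bar> + (1 - l) * \<bar>y\<bar>"
    using l0 l1 by (metis abs_mult abs_of_nonneg abs_triangle_ineq diff_ge_0_iff_ge)
  then have "\<bar>l * x + (1 - l) * y\<bar> powr p \<le> (l * \<bar>x\<bar> + (1 - l) * \<bar>y\<bar>) powr p"
    using p by (intro powr_mono2) auto
  also have "\<dots> \<le> l * \<bar>x\<bar> powr p + (1 - l) * \<bar>y\<bar> powr p"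
    by (rule powr_convex_ineq) (use assms in auto)
  finally show ?thesis .
qed

lemma convex_abs_powr: "p \<ge> 1 \<Longrightarrow> convex_on UNIV (\<lambda>t::real. \<bar>t\<bar> powr p)"
proof (intro convex_onI convex_UNIV)
  fix x y t :: real assume "p \<ge> 1" "0 < t" "t < 1"
  then show "\<bar>(1 - t) *\<^sub>R x + t *\<^sub>R y\<bar> powr p \<le> (1 - t) * \<bar>x\<bar> powr p + t * \<bar>y\<bar> powr p"
    using abs_powr_convex_ineq[of p t y x] by (simp add: algebra_simps)
qed

lemma minkowski_pointwise:
  fixes p A B x y :: real
  assumes p: "p \<ge> 1" and A: "A > 0" and B: "B > 0"
  shows "\<bar>x + y\<bar> powr p \<le> (A + B) powr (p - 1) * (\<bar>x\<bar> powr p / A powr (p - 1) + \<bar>y\<bar> powr p / B powr (p - 1))"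
proof -
  define l where "l = A / (A + B)"
  have l0: "0 \<le> l" and l1: "l \<le> 1" using A B by (auto simp: l_def field_simps)
  have 1: "1 - l = B / (A + B)" using A B by (simp add: l_def field_simps)
  have "l * (x / A) = x / (A + B)" using A B by (simp add: l_def)
  moreover have "(1 - l) * (y / B) = y / (A + B)" using A B by (simp add: 1)
  ultimately have "x + y = (A + B) * (l * (x / A) + (1 - l) * (y / B))"
    using A B by (simp add: add_divide_distrib[symmetric])
  then have "\<bar>x + y\<bar> powr p = (A + B) powr p * \<bar>l * (x / A) + (1 - l) * (y / B)\<bar> powr p"
    using A B by (simp add: abs_mult powr_mult)
  also have "\<dots> \<le> (A + B) powr p * (l * \<bar>x / A\<bar> powr p + (1 - l) * \<bar>y / B\<bar> powr p)"
    by (intro mult_left_mono abs_powr_convex_ineq) (use p l0 l1 in auto)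
  also have "\<dots> = (A + B) powr (p - 1) * (\<bar>x\<bar> powr p / A powr (p - 1) + \<bar>y\<bar> powr p / B powr (p - 1))"
  proof -
    have e1: "(A + B) powr p = (A + B) powr (p - 1) * (A + B)" using A B
      by (simp add: powr_diff)
    have e2: "\<bar>x / A\<bar> powr p = \<bar>x\<bar> powr p / (A powr (p - 1) * A)" using A
      by (simp add: powr_divide powr_diff)
    have e3: "\<bar>y / B\<bar> powr p = \<bar>y\<bar> powr p / (B powr (p - 1) * B)" using B
      by (simp add: powr_divide powr_diff)
    have gen: "C * (A + B) * (A / (A + B) * (X / (a' * A)) + B / (A + B) * (Y / (b' * B)))
       = C * (X / a' + Y / b')" if "A > 0" "B > 0" "a' > 0" "b' > 0" for C X Y a' b' :: real
    proof -
      have "A + B > 0" using that by simp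
      then have "A + B \<noteq> 0" by simp
      have 1: "A / (A + B) * (X / (a' * A)) = (X / a') / (A + B)" using that by simp
      have 2: "B / (A + B) * (Y / (b' * B)) = (Y / b') / (A + B)" using that by simp
      have 3: "(A + B) * (X / a' / (A + B) + Y / b' / (A + B)) = X / a' + Y / b'"
        using \<open>A + B \<noteq> 0\<close> by (simp only: add_divide_distrib[symmetric]) simp
      show ?thesis unfolding 1 2 mult.assoc 3 ..
    qed
    show ?thesis unfolding e1 e2 e3 1 unfolding l_def using A B
      by (intro gen) auto
  qed
  finally show ?thesis .
qed

lemma Lp_norm_nonneg: "Lp_norm p g \<ge> 0"
  unfolding Lp_norm_def by simp

lemma Lp_mem_meas: "Lp_mem p g \<Longrightarrow> g \<in> borel_measurable LI"
  unfolding Lp_mem_def by simp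

lemma Lp_norm_powr:
  assumes p: "p \<ge> 1" and g: "Lp_mem p g"
  shows "Lp_norm p g powr p = (\<integral>x. \<bar>g x\<bar> powr p \<partial>LI)"
proof -
  have "(\<integral>x. \<bar>g x\<bar> powr p \<partial>LI) \<ge> 0" by (intro Bochner_Integration.integral_nonneg) simp
  then show ?thesis using p unfolding Lp_norm_def by (simp add: powr_powr)
qed

lemma Lp_mem_bound:
  assumes p: "p \<ge> 1" and h: "Lp_mem p h" and g: "g \<in> borel_measurable LI"
    and le: "AE x in LI. \<bar>g x\<bar> \<le> \<bar>h x\<bar>"
  shows "Lp_mem p g" "Lp_norm p g \<le> Lp_norm p h"
proof -
  have hi: "integrable LI (\<lambda>x. \<bar>h x\<bar> powr p)" using h unfolding Lp_mem_def by simp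
  have le2: "AE x in LI. \<bar>g x\<bar> powr p \<le> \<bar>h x\<bar> powr p"
    using le by eventually_elim (use p in \<open>auto intro: powr_mono2\<close>)
  have gi: "integrable LI (\<lambda>x. \<bar>g x\<bar> powr p)"
    by (rule Bochner_Integration.integrable_bound[OF hi]) (use g le2 in auto)
  show "Lp_mem p g" using g gi unfolding Lp_mem_def by simp
  have "(\<integral>x. \<bar>g x\<bar> powr p \<partial>LI) \<le> (\<integral>x. \<bar>h x\<bar> powr p \<partial>LI)"
    by (rule integral_mono_AE[OF gi hi le2])
  then show "Lp_norm p g \<le> Lp_norm p h" unfolding Lp_norm_def
    using p by (intro powr_mono2) (auto intro!: Bochner_Integration.integral_nonneg)
qed

lemma Lp_AE_cong:
  assumes g: "g \<in> borel_measurable LI" and h: "h \<in> borel_measurable LI"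
    and eq: "AE x in LI. g x = h x"
  shows "Lp_norm p g = Lp_norm p h" "Lp_mem p g \<longleftrightarrow> Lp_mem p h"
proof -
  have eq2: "AE x in LI. \<bar>g x\<bar> powr p = \<bar>h x\<bar> powr p" using eq by eventually_elim simp
  have "(\<integral>x. \<bar>g x\<bar> powr p \<partial>LI) = (\<integral>x. \<bar>h x\<bar> powr p \<partial>LI)"
    by (rule integral_cong_AE) (use g h eq2 in auto)
  then show "Lp_norm p g = Lp_norm p h" unfolding Lp_norm_def by simp
  have "integrable LI (\<lambda>x. \<bar>g x\<bar> powr p) \<longleftrightarrow> integrable LI (\<lambda>x. \<bar>h x\<bar> powr p)"
    by (rule integrable_cong_AE) (use g h eq2 in auto)
  then show "Lp_mem p g \<longleftrightarrow> Lp_mem p h" using g h unfolding Lp_mem_def by simp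
qed

lemma Lp_norm_zero_AE:
  assumes p: "p \<ge> 1" and g: "Lp_mem p g" and z: "Lp_norm p g = 0"
  shows "AE x in LI. g x = 0"
proof -
  have gi: "integrable LI (\<lambda>x. \<bar>g x\<bar> powr p)" using g unfolding Lp_mem_def by simp
  have "(\<integral>x. \<bar>g x\<bar> powr p \<partial>LI) = 0"
    using Lp_norm_powr[OF p g] z p by simp
  then have "AE x in LI. \<bar>g x\<bar> powr p = 0"
    using integral_nonneg_eq_0_iff_AE[OF gi] by auto
  then show ?thesis by eventually_elim simp
qed

lemma Lp_mem_cmult:
  assumes p: "p \<ge> 1" and g: "Lp_mem p g"
  shows "Lp_mem p (\<lambda>x. c * g x)" "Lp_norm p (\<lambda>x. c * g x) = \<bar>c\<bar> * Lp_norm p g"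
proof -
  have gm: "g \<in> borel_measurable LI" using g by (rule Lp_mem_meas)
  have gi: "integrable LI (\<lambda>x. \<bar>g x\<bar> powr p)" using g unfolding Lp_mem_def by simp
  have e: "\<bar>c * g x\<bar> powr p = \<bar>c\<bar> powr p * \<bar>g x\<bar> powr p" for x
    by (simp add: abs_mult powr_mult)
  show "Lp_mem p (\<lambda>x. c * g x)" unfolding Lp_mem_def e using gm gi by auto
  have "(\<integral>x. \<bar>c * g x\<bar> powr p \<partial>LI) = \<bar>c\<bar> powr p * (\<integral>x. \<bar>g x\<bar> powr p \<partial>LI)"
    unfolding e by simp
  moreover have "(\<integral>x. \<bar>g x\<bar> powr p \<partial>LI) \<ge> 0" by (intro Bochner_Integration.integral_nonneg) simp
  ultimately show "Lp_norm p (\<lambda>x. c * g x) = \<bar>c\<bar> * Lp_norm p g"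
    unfolding Lp_norm_def using p by (simp add: powr_mult powr_powr)
qed

lemma Lp_mem_add:
  assumes p: "p \<ge> 1" and g: "Lp_mem p g" and h: "Lp_mem p h"
  shows "Lp_mem p (\<lambda>x. g x + h x)"
proof -
  have gm: "g \<in> borel_measurable LI" using g by (rule Lp_mem_meas)
  have hm: "h \<in> borel_measurable LI" using h by (rule Lp_mem_meas)
  have gi: "integrable LI (\<lambda>x. \<bar>g x\<bar> powr p)" using g unfolding Lp_mem_def by simp
  have hi: "integrable LI (\<lambda>x. \<bar>h x\<bar> powr p)" using h unfolding Lp_mem_def by simp
  have bnd: "\<bar>g x + h x\<bar> powr p \<le> 2 powr (p - 1) * (\<bar>g x\<bar> powr p + \<bar>h x\<bar> powr p)" for x
    using minkowski_pointwise[OF p, of 1 1 "g x" "h x"] by simp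
  have "integrable LI (\<lambda>x. \<bar>g x + h x\<bar> powr p)"
    by (rule Bochner_Integration.integrable_bound[where f="\<lambda>x. 2 powr (p - 1) * (\<bar>g x\<bar> powr p + \<bar>h x\<bar> powr p)"])
       (use gi hi gm hm bnd in auto)
  then show ?thesis using gm hm unfolding Lp_mem_def by auto
qed

lemma Lp_mem_diff:
  assumes p: "p \<ge> 1" and g: "Lp_mem p g" and h: "Lp_mem p h"
  shows "Lp_mem p (\<lambda>x. g x - h x)"
  using Lp_mem_add[OF p g Lp_mem_cmult(1)[OF p h, of "-1"]] by simp

lemma Lp_mem_zero: "p \<ge> 1 \<Longrightarrow> Lp_mem p (\<lambda>x. 0)"
  unfolding Lp_mem_def by auto

lemma minkowski:
  assumes p: "p \<ge> 1" and g: "Lp_mem p g" and h: "Lp_mem p h"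
  shows "Lp_norm p (\<lambda>x. g x + h x) \<le> Lp_norm p g + Lp_norm p h"
proof -
  have gm: "g \<in> borel_measurable LI" using g by (rule Lp_mem_meas)
  have hm: "h \<in> borel_measurable LI" using h by (rule Lp_mem_meas)
  have gi: "integrable LI (\<lambda>x. \<bar>g x\<bar> powr p)" using g unfolding Lp_mem_def by simp
  have hi: "integrable LI (\<lambda>x. \<bar>h x\<bar> powr p)" using h unfolding Lp_mem_def by simp
  have ghi: "integrable LI (\<lambda>x. \<bar>g x + h x\<bar> powr p)"
    using Lp_mem_add[OF p g h] unfolding Lp_mem_def by simp
  define A where "A = Lp_norm p g"
  define B where "B = Lp_norm p h"
  have A0: "A \<ge> 0" and B0: "B \<ge> 0" by (auto simp: A_def B_def Lp_norm_nonneg)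
  show ?thesis
  proof (cases "A = 0")
    case True
    then have "AE x in LI. g x = 0" using Lp_norm_zero_AE[OF p g] by (simp add: A_def)
    then have "AE x in LI. g x + h x = h x" by eventually_elim simp
    then have "Lp_norm p (\<lambda>x. g x + h x) = Lp_norm p h"
      by (intro Lp_AE_cong) (use gm hm in auto)
    then show ?thesis using True by (simp add: A_def)
  next
    case Ane: False
    show ?thesis
    proof (cases "B = 0")
      case True
      then have "AE x in LI. h x = 0" using Lp_norm_zero_AE[OF p h] by (simp add: B_def)
      then have "AE x in LI. g x + h x = g x" by eventually_elim simp
      then have "Lp_norm p (\<lambda>x. g x + h x) = Lp_norm p g"
        by (intro Lp_AE_cong) (use gm hm in auto)
      then show ?thesis using True by (simp add: B_def)
    next
      case Bne: False
      have Ap: "A > 0" and Bp: "B > 0" using A0 B0 Ane Bne by auto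
      define C where "C = (A + B) powr (p - 1)"
      have "(\<integral>x. \<bar>g x + h x\<bar> powr p \<partial>LI)
          \<le> (\<integral>x. C * (\<bar>g x\<bar> powr p / A powr (p - 1) + \<bar>h x\<bar> powr p / B powr (p - 1)) \<partial>LI)"
        by (intro integral_mono ghi) (use gi hi minkowski_pointwise[OF p Ap Bp] in \<open>auto simp: C_def\<close>)
      also have "\<dots> = C * ((\<integral>x. \<bar>g x\<bar> powr p \<partial>LI) / A powr (p - 1)
                          + (\<integral>x. \<bar>h x\<bar> powr p \<partial>LI) / B powr (p - 1))"
        using gi hi by simp
      also have "\<dots> = C * (A powr p / A powr (p - 1) + B powr p / B powr (p - 1))"
        using Lp_norm_powr[OF p g] Lp_norm_powr[OF p h] by (simp add: A_def B_def)
      also have "\<dots> = C * (A + B)"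
        using Ap Bp by (simp add: powr_diff)
      also have "\<dots> = (A + B) powr p"
        using Ap Bp by (simp add: C_def powr_diff)
      finally have le: "(\<integral>x. \<bar>g x + h x\<bar> powr p \<partial>LI) \<le> (A + B) powr p" .
      have "Lp_norm p (\<lambda>x. g x + h x) \<le> ((A + B) powr p) powr (1 / p)"
        unfolding Lp_norm_def using p le by (intro powr_mono2) (auto intro!: Bochner_Integration.integral_nonneg)
      also have "\<dots> = A + B" using p Ap Bp by (simp add: powr_powr)
      finally show ?thesis by (simp add: A_def B_def)
    qed
  qed
qed

lemma minkowski_diff:
  assumes p: "p \<ge> 1" and g: "Lp_mem p g" and h: "Lp_mem p h"
  shows "Lp_norm p (\<lambda>x. g x - h x) \<le> Lp_norm p g + Lp_norm p h"
  using minkowski[OF p g Lp_mem_cmult(1)[OF p h, of "-1"]] Lp_mem_cmult(2)[OF p h, of "-1"] by simp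

lemma sets_LI_Icc[simp]: "{0..1::real} \<inter> space lebesgue \<in> sets lebesgue"
  by simp

lemma affine_meas_leb:
  assumes "a \<noteq> 0"
  shows "(\<lambda>y::real. (y - b) / a) \<in> lebesgue \<rightarrow>\<^sub>M lebesgue"
proof -
  have "(\<lambda>x::real. - b / a + (\<Sum>j\<in>Basis. ((1 / a) * (x \<bullet> j)) *\<^sub>R j)) \<in> lebesgue \<rightarrow>\<^sub>M lebesgue"
    by (rule lebesgue_affine_measurable) (use assms in auto)
  moreover have "(\<lambda>x::real. - b / a + (\<Sum>j\<in>Basis. ((1 / a) * (x \<bullet> j)) *\<^sub>R j)) = (\<lambda>y. (y - b) / a)"
    using assms by (auto simp: fun_eq_iff field_simps)
  ultimately show ?thesis by simp
qed

lemma extend_meas_ennreal: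
  assumes "\<psi> \<in> borel_measurable LI"
  shows "(\<lambda>t. if t \<in> {0..1} then \<psi> t else (0::ennreal)) \<in> borel_measurable lebesgue"
  using assms measurable_restrict_space_iff[of "{0..1::real}" lebesgue 0 borel \<psi>] by simp

lemma extend_meas_real:
  assumes "\<psi> \<in> borel_measurable LI"
  shows "(\<lambda>t. if t \<in> {0..1} then \<psi> t else (0::real)) \<in> borel_measurable lebesgue"
  using assms measurable_restrict_space_iff[of "{0..1::real}" lebesgue 0 borel \<psi>] by simp

lemma nn_affine_piece:
  fixes \<psi> :: "real \<Rightarrow> ennreal"
  assumes a: "a > 0" and b: "0 \<le> b" and ab: "a + b \<le> 1" and psi: "\<psi> \<in> borel_measurable LI"
  shows "(\<lambda>y. \<psi> ((y - b) / a) * indicator {b..a+b} y) \<in> borel_measurable LI"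
    and "(\<integral>\<^sup>+ y. \<psi> ((y - b) / a) * indicator {b..a+b} y \<partial>LI) = ennreal a * (\<integral>\<^sup>+ t. \<psi> t \<partial>LI)"
proof -
  define \<psi>' where "\<psi>' = (\<lambda>t. if t \<in> {0..1} then \<psi> t else (0::ennreal))"
  have m': "\<psi>' \<in> borel_measurable lebesgue" unfolding \<psi>'_def by (rule extend_meas_ennreal[OF psi])
  have mT: "(\<lambda>y. \<psi>' ((y - b) / a)) \<in> borel_measurable lebesgue"
    using measurable_comp[OF affine_meas_leb[of a b] m'] a by (simp add: o_def)
  have eq: "\<psi>' ((y - b) / a) = \<psi> ((y - b) / a) * indicator {b..a+b} y" for y
  proof -
    have "(y - b) / a \<in> {0..1} \<longleftrightarrow> y \<in> {b..a+b}" using a by (auto simp: field_simps)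
    then show ?thesis unfolding \<psi>'_def by (auto simp: indicator_def)
  qed
  have mT2: "(\<lambda>y. \<psi> ((y - b) / a) * indicator {b..a+b} y) \<in> borel_measurable lebesgue"
    using mT unfolding eq .
  then show "(\<lambda>y. \<psi> ((y - b) / a) * indicator {b..a+b} y) \<in> borel_measurable LI"
    by (rule measurable_restrict_space1)
  have "(\<integral>\<^sup>+ y. \<psi> ((y - b) / a) * indicator {b..a+b} y \<partial>LI)
      = (\<integral>\<^sup>+ y. \<psi> ((y - b) / a) * indicator {b..a+b} y * indicator {0..1} y \<partial>lebesgue)"
    by (rule nn_integral_restrict_space) simp
  also have "\<dots> = (\<integral>\<^sup>+ y. \<psi>' ((y - b) / a) \<partial>lebesgue)"
  proof (intro nn_integral_cong)
    fix y :: real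
    have "y \<in> {b..a+b} \<Longrightarrow> y \<in> {0..1}" using b ab a by auto
    then show "\<psi> ((y - b) / a) * indicator {b..a + b} y * indicator {0..1} y = \<psi>' ((y - b) / a)"
      unfolding eq by (auto simp: indicator_def)
  qed
  also have "\<dots> = ennreal \<bar>a\<bar> * (\<integral>\<^sup>+ x. \<psi>' ((b + a * x - b) / a) \<partial>lebesgue)"
    by (rule nn_integral_real_affine_lebesgue[OF mT]) (use a in simp)
  also have "\<dots> = ennreal a * (\<integral>\<^sup>+ x. \<psi>' x \<partial>lebesgue)"
    using a by simp
  also have "(\<integral>\<^sup>+ x. \<psi>' x \<partial>lebesgue) = (\<integral>\<^sup>+ x. \<psi> x * indicator {0..1} x \<partial>lebesgue)"
    by (intro nn_integral_cong) (auto simp: \<psi>'_def indicator_def)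
  also have "\<dots> = (\<integral>\<^sup>+ x. \<psi> x \<partial>LI)"
    by (rule nn_integral_restrict_space[symmetric]) simp
  finally show "(\<integral>\<^sup>+ y. \<psi> ((y - b) / a) * indicator {b..a+b} y \<partial>LI) = ennreal a * (\<integral>\<^sup>+ t. \<psi> t \<partial>LI)" .
qed

lemma real_affine_piece_meas:
  fixes \<psi> :: "real \<Rightarrow> real"
  assumes a: "a > 0" and b: "0 \<le> b" and ab: "a + b \<le> 1" and psi: "\<psi> \<in> borel_measurable LI"
  shows "(\<lambda>y. \<psi> ((y - b) / a) * indicator {b..a+b} y) \<in> borel_measurable LI"
proof -
  define \<psi>' where "\<psi>' = (\<lambda>t. if t \<in> {0..1} then \<psi> t else (0::real))"
  have m': "\<psi>' \<in> borel_measurable lebesgue" unfolding \<psi>'_def by (rule extend_meas_real[OF psi])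
  have mT: "(\<lambda>y. \<psi>' ((y - b) / a)) \<in> borel_measurable lebesgue"
    using measurable_comp[OF affine_meas_leb[of a b] m'] a by (simp add: o_def)
  have eq: "\<psi>' ((y - b) / a) = \<psi> ((y - b) / a) * indicator {b..a+b} y" for y
  proof -
    have "(y - b) / a \<in> {0..1} \<longleftrightarrow> y \<in> {b..a+b}" using a by (auto simp: field_simps)
    then show ?thesis unfolding \<psi>'_def by (auto simp: indicator_def)
  qed
  show ?thesis using mT unfolding eq by (rule measurable_restrict_space1)
qed

lemma Lp_mem_nn:
  assumes g: "g \<in> borel_measurable LI"
  shows "Lp_mem p g \<longleftrightarrow> (\<integral>\<^sup>+ x. ennreal (\<bar>g x\<bar> powr p) \<partial>LI) < \<infinity>"
  unfolding Lp_mem_def integrable_iff_bounded using g by auto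

lemma Lp_nn_eq:
  assumes p: "p \<ge> 1" and g: "Lp_mem p g"
  shows "(\<integral>\<^sup>+ x. ennreal (\<bar>g x\<bar> powr p) \<partial>LI) = ennreal (Lp_norm p g powr p)"
proof -
  have gi: "integrable LI (\<lambda>x. \<bar>g x\<bar> powr p)" using g unfolding Lp_mem_def by simp
  show ?thesis using nn_integral_eq_integral[OF gi] Lp_norm_powr[OF p g] by simp
qed

lemma AE_LI_finite: "finite F \<Longrightarrow> AE y in LI. y \<notin> F"
proof -
  assume F: "finite F"
  have "F \<in> null_sets lebesgue"
    using finite_imp_null_set_lborel[OF F] by (simp add: null_sets_completionI)
  then have "AE y in lebesgue. y \<notin> F" by (rule AE_not_in)
  then show ?thesis by (subst AE_restrict_space_iff) (auto elim: eventually_mono)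
qed

locale part =
  fixes N :: nat and xs a b :: "nat \<Rightarrow> real"
  assumes N: "N \<ge> 1"
    and x0: "xs 0 = 0" and xN: "xs N = 1"
    and xmono: "\<forall>i<N. xs i < xs (Suc i)"
    and u: "\<forall>i\<in>{1..N}. a i * 0 + b i = xs (i - 1) \<and> a i * 1 + b i = xs i"
begin

lemma xs_strict: "i < j \<Longrightarrow> j \<le> N \<Longrightarrow> xs i < xs j"
proof (induction j)
  case 0 then show ?case by simp
next
  case (Suc j)
  have s: "xs j < xs (Suc j)" using xmono Suc.prems by auto
  show ?case
  proof (cases "i = j")
    case True then show ?thesis using s by simp
  next
    case False then have "i < j" using Suc.prems by simp
    then show ?thesis using Suc.IH Suc.prems s by simp
  qed
qed

lemma xs_mono: "i \<le> j \<Longrightarrow> j \<le> N \<Longrightarrow> xs i \<le> xs j"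
  using xs_strict by (cases "i = j") (auto intro: less_imp_le)

lemma xs_range: "i \<le> N \<Longrightarrow> 0 \<le> xs i \<and> xs i \<le> 1"
  using xs_mono[of 0 i] xs_mono[of i N] x0 xN by auto

lemma ab:
  assumes i: "i \<in> {1..N}"
  shows "b i = xs (i - 1)" "a i = xs i - xs (i - 1)" "a i > 0" "0 \<le> b i" "a i + b i \<le> 1"
proof -
  show b: "b i = xs (i - 1)" using u i by auto
  have h: "a i * 0 + b i = xs (i - 1) \<and> a i * 1 + b i = xs i" using u i by blast
  then show a: "a i = xs i - xs (i - 1)" by simp
  show "a i > 0" using a xs_strict[of "i - 1" i] i by auto
  show "0 \<le> b i" using b xs_range[of "i - 1"] i by auto
  show "a i + b i \<le> 1" using a b xs_range[of i] i by auto
qed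

lemma img_eq:
  assumes i: "i \<in> {1..N}"
  shows "(\<lambda>t. a i * t + b i) ` {0..1} = {b i..a i + b i}"
proof -
  have ap: "a i > 0" using ab[OF i] by simp
  show ?thesis
  proof (intro set_eqI iffI)
    fix y assume "y \<in> (\<lambda>t. a i * t + b i) ` {0..1}"
    then obtain t where t: "t \<in> {0..1}" "y = a i * t + b i" by auto
    then show "y \<in> {b i..a i + b i}" using ap by (auto simp: mult_le_cancel_left1)
  next
    fix y assume y: "y \<in> {b i..a i + b i}"
    have "y = a i * ((y - b i) / a i) + b i" using ap by simp
    moreover have "(y - b i) / a i \<in> {0..1}" using y ap by (auto simp: field_simps)
    ultimately show "y \<in> (\<lambda>t. a i * t + b i) ` {0..1}" by blast
  qed
qed

lemma img_disj:
  assumes i: "i \<in> {1..N}" and j: "j \<in> {1..N}" and ij: "i \<noteq> j"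
    and yi: "y \<in> {b i..a i + b i}" and yj: "y \<in> {b j..a j + b j}"
  shows "y \<in> xs ` {..N}"
proof -
  have iv: "{b k..a k + b k} = {xs (k - 1)..xs k}" if "k \<in> {1..N}" for k
    using ab[OF that] by simp
  have *: "y = xs k" if "k \<in> {1..N}" "l \<in> {1..N}" "k < l" "y \<in> {xs (k - 1)..xs k}" "y \<in> {xs (l - 1)..xs l}" for k l
  proof -
    have "xs k \<le> xs (l - 1)" using xs_mono[of k "l - 1"] that by auto
    then show ?thesis using that by auto
  qed
  show ?thesis
  proof (cases "i < j")
    case True then show ?thesis using *[of i j] i j yi yj iv by force
  next
    case False then have "j < i" using ij by simp
    then show ?thesis using *[of j i] i j yi yj iv by force
  qed
qed

lemma glue_nn:
  fixes \<psi> :: "nat \<Rightarrow> real \<Rightarrow> ennreal"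
  assumes m: "\<And>i. i \<in> {1..N} \<Longrightarrow> \<psi> i \<in> borel_measurable LI"
  shows "(\<integral>\<^sup>+ y. (\<Sum>i=1..N. \<psi> i ((y - b i) / a i) * indicator ((\<lambda>t. a i * t + b i) ` {0..1}) y) \<partial>LI)
       = (\<Sum>i=1..N. ennreal (a i) * (\<integral>\<^sup>+ t. \<psi> i t \<partial>LI))"
proof -
  have "(\<integral>\<^sup>+ y. (\<Sum>i=1..N. \<psi> i ((y - b i) / a i) * indicator ((\<lambda>t. a i * t + b i) ` {0..1}) y) \<partial>LI)
      = (\<integral>\<^sup>+ y. (\<Sum>i=1..N. \<psi> i ((y - b i) / a i) * indicator {b i..a i + b i} y) \<partial>LI)"
    by (intro nn_integral_cong sum.cong) (auto simp: img_eq)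
  also have "\<dots> = (\<Sum>i=1..N. (\<integral>\<^sup>+ y. \<psi> i ((y - b i) / a i) * indicator {b i..a i + b i} y \<partial>LI))"
    by (rule nn_integral_sum) (rule nn_affine_piece(1)[OF ab(3) ab(4) ab(5) m]; simp)
  also have "\<dots> = (\<Sum>i=1..N. ennreal (a i) * (\<integral>\<^sup>+ t. \<psi> i t \<partial>LI))"
    by (intro sum.cong refl nn_affine_piece(2)[OF ab(3) ab(4) ab(5) m]; simp)
  finally show ?thesis .
qed

definition glue :: "(nat \<Rightarrow> real \<Rightarrow> real) \<Rightarrow> real \<Rightarrow> real" where
  "glue \<psi> y = (\<Sum>i=1..N. \<psi> i ((y - b i) / a i) * indicator ((\<lambda>t. a i * t + b i) ` {0..1}) y)"

lemma glue_meas: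
  assumes m: "\<And>i. i \<in> {1..N} \<Longrightarrow> \<psi> i \<in> borel_measurable LI"
  shows "glue \<psi> \<in> borel_measurable LI"
proof -
  have "(\<lambda>y. \<psi> i ((y - b i) / a i) * indicator {b i..a i + b i} y) \<in> borel_measurable LI"
    if "i \<in> {1..N}" for i
    using real_affine_piece_meas[OF ab(3)[OF that] ab(4)[OF that] ab(5)[OF that] m[OF that]] .
  then have "(\<lambda>y. \<Sum>i=1..N. \<psi> i ((y - b i) / a i) * indicator {b i..a i + b i} y) \<in> borel_measurable LI"
    by (intro borel_measurable_sum) auto
  moreover have "glue \<psi> = (\<lambda>y. \<Sum>i=1..N. \<psi> i ((y - b i) / a i) * indicator {b i..a i + b i} y)"
    unfolding glue_def by (intro ext sum.cong) (auto simp: img_eq)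
  ultimately show ?thesis by simp
qed

lemma glue_pow_pointwise:
  assumes y: "y \<notin> xs ` {..N}"
  shows "\<bar>glue \<psi> y\<bar> powr p
       = (\<Sum>i=1..N. \<bar>\<psi> i ((y - b i) / a i)\<bar> powr p * indicator ((\<lambda>t. a i * t + b i) ` {0..1}) y)"
proof (cases "\<exists>j\<in>{1..N}. y \<in> (\<lambda>t. a j * t + b j) ` {0..1}")
  case True
  then obtain j where j: "j \<in> {1..N}" "y \<in> (\<lambda>t. a j * t + b j) ` {0..1}" by blast
  have other: "y \<notin> (\<lambda>t. a i * t + b i) ` {0..1}" if "i \<in> {1..N}" "i \<noteq> j" for i
    using img_disj[of i j y] img_eq that j y by auto
  have "glue \<psi> y = \<psi> j ((y - b j) / a j)"
    unfolding glue_def using j other by (subst sum.remove[of _ j]) (auto intro!: sum.neutral)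
  moreover have "(\<Sum>i=1..N. \<bar>\<psi> i ((y - b i) / a i)\<bar> powr p * indicator ((\<lambda>t. a i * t + b i) ` {0..1}) y)
      = \<bar>\<psi> j ((y - b j) / a j)\<bar> powr p"
    using j other by (subst sum.remove[of _ j]) (auto intro!: sum.neutral)
  ultimately show ?thesis by simp
next
  case False
  then show ?thesis unfolding glue_def by (auto intro!: sum.neutral)
qed

lemma glue_Lp:
  assumes p: "p \<ge> 1" and m: "\<And>i. i \<in> {1..N} \<Longrightarrow> Lp_mem p (\<psi> i)"
  shows "Lp_mem p (glue \<psi>)" "Lp_norm p (glue \<psi>) powr p = (\<Sum>i=1..N. a i * Lp_norm p (\<psi> i) powr p)"
proof -
  have mm: "\<psi> i \<in> borel_measurable LI" if "i \<in> {1..N}" for i using m[OF that] by (rule Lp_mem_meas)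
  have gm: "glue \<psi> \<in> borel_measurable LI" by (rule glue_meas[OF mm])
  have "AE y in LI. y \<notin> xs ` {..N}" by (rule AE_LI_finite) simp
  then have ae: "AE y in LI. ennreal (\<bar>glue \<psi> y\<bar> powr p)
     = (\<Sum>i=1..N. ennreal (\<bar>\<psi> i ((y - b i) / a i)\<bar> powr p) * indicator ((\<lambda>t. a i * t + b i) ` {0..1}) y)"
  proof eventually_elim
    case (elim y)
    show ?case unfolding glue_pow_pointwise[OF elim]
      by (subst sum_ennreal[symmetric]) (auto simp: indicator_def intro!: sum.cong)
  qed
  have "(\<integral>\<^sup>+ y. ennreal (\<bar>glue \<psi> y\<bar> powr p) \<partial>LI)
      = (\<integral>\<^sup>+ y. (\<Sum>i=1..N. ennreal (\<bar>\<psi> i ((y - b i) / a i)\<bar> powr p) * indicator ((\<lambda>t. a i * t + b i) ` {0..1}) y) \<partial>LI)"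
    by (rule nn_integral_cong_AE[OF ae])
  also have "\<dots> = (\<Sum>i=1..N. ennreal (a i) * (\<integral>\<^sup>+ t. ennreal (\<bar>\<psi> i t\<bar> powr p) \<partial>LI))"
    by (rule glue_nn[where \<psi>="\<lambda>i t. ennreal (\<bar>\<psi> i t\<bar> powr p)"]) (use mm in auto)
  also have "\<dots> = (\<Sum>i=1..N. ennreal (a i * Lp_norm p (\<psi> i) powr p))"
  proof (intro sum.cong refl)
    fix i assume i: "i \<in> {1..N}"
    have "ennreal (a i * Lp_norm p (\<psi> i) powr p) = ennreal (a i) * ennreal (Lp_norm p (\<psi> i) powr p)"
      using ab(3)[OF i] by (intro ennreal_mult) auto
    then show "ennreal (a i) * (\<integral>\<^sup>+ t. ennreal (\<bar>\<psi> i t\<bar> powr p) \<partial>LI) = ennreal (a i * Lp_norm p (\<psi> i) powr p)"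
      using Lp_nn_eq[OF p m[OF i]] by simp
  qed
  also have "\<dots> = ennreal (\<Sum>i=1..N. a i * Lp_norm p (\<psi> i) powr p)"
  proof (rule sum_ennreal)
    fix i assume "i \<in> {1..N}"
    then have "a i > 0" by (rule ab(3))
    then show "0 \<le> a i * Lp_norm p (\<psi> i) powr p" by simp
  qed
  finally have eq: "(\<integral>\<^sup>+ y. ennreal (\<bar>glue \<psi> y\<bar> powr p) \<partial>LI) = ennreal (\<Sum>i=1..N. a i * Lp_norm p (\<psi> i) powr p)" .
  show mem: "Lp_mem p (glue \<psi>)" using Lp_mem_nn[OF gm] eq by simp
  have "ennreal (Lp_norm p (glue \<psi>) powr p) = ennreal (\<Sum>i=1..N. a i * Lp_norm p (\<psi> i) powr p)"
    using Lp_nn_eq[OF p mem] eq by simp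
  moreover have "(\<Sum>i=1..N. a i * Lp_norm p (\<psi> i) powr p) \<ge> 0"
  proof (rule sum_nonneg)
    fix i assume "i \<in> {1..N}"
    then have "a i > 0" by (rule ab(3))
    then show "0 \<le> a i * Lp_norm p (\<psi> i) powr p" by simp
  qed
  ultimately show "Lp_norm p (glue \<psi>) powr p = (\<Sum>i=1..N. a i * Lp_norm p (\<psi> i) powr p)"
    by simp
qed

end

lemma LI_space_measure: "emeasure LI (space LI) \<noteq> 0"
  by (simp add: emeasure_restrict_space)

lemma Linf_bound:
  assumes "Linf_mem g"
  shows "AE t in LI. \<bar>g t\<bar> \<le> Linf_norm g" "Linf_norm g \<ge> 0"
proof -
  define E where "E = esssup LI (\<lambda>x. ereal \<bar>g x\<bar>)"
  have gm: "g \<in> borel_measurable LI" and Elt: "E < \<infinity>" using assms by (auto simp: Linf_mem_def E_def)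
  have "esssup LI (\<lambda>x. ereal 0) \<le> E" unfolding E_def
    by (rule esssup_mono) auto
  then have E0: "E \<ge> 0" using esssup_const[OF LI_space_measure, of "ereal 0"] by (simp add: zero_ereal_def)
  have "AE t in LI. ereal \<bar>g t\<bar> \<le> E" unfolding E_def by (rule esssup_AE)
  then show "AE t in LI. \<bar>g t\<bar> \<le> Linf_norm g"
  proof eventually_elim
    case (elim t)
    then show ?case using E0 Elt unfolding Linf_norm_def E_def[symmetric]
      by (cases E) auto
  qed
  show "Linf_norm g \<ge> 0" using E0 Elt unfolding Linf_norm_def E_def[symmetric]
    by (cases E) auto
qed

lemma Linf_mult_Lp:
  assumes p: "p \<ge> 1" and al: "Linf_mem \<alpha>" and g: "Lp_mem p g"
  shows "Lp_mem p (\<lambda>t. \<alpha> t * g t)" "Lp_norm p (\<lambda>t. \<alpha> t * g t) \<le> Linf_norm \<alpha> * Lp_norm p g"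
proof -
  have am: "\<alpha> \<in> borel_measurable LI" using al by (simp add: Linf_mem_def)
  have gm: "g \<in> borel_measurable LI" using g by (rule Lp_mem_meas)
  have h: "Lp_mem p (\<lambda>t. Linf_norm \<alpha> * g t)" by (rule Lp_mem_cmult(1)[OF p g])
  have le: "AE t in LI. \<bar>\<alpha> t * g t\<bar> \<le> \<bar>Linf_norm \<alpha> * g t\<bar>"
    using Linf_bound(1)[OF al]
  proof eventually_elim
    case (elim t)
    then show ?case using Linf_bound(2)[OF al] by (simp add: abs_mult mult_right_mono)
  qed
  show "Lp_mem p (\<lambda>t. \<alpha> t * g t)" by (rule Lp_mem_bound(1)[OF p h _ le]) (use am gm in simp)
  have "Lp_norm p (\<lambda>t. \<alpha> t * g t) \<le> Lp_norm p (\<lambda>t. Linf_norm \<alpha> * g t)"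
    by (rule Lp_mem_bound(2)[OF p h _ le]) (use am gm in simp)
  also have "\<dots> = Linf_norm \<alpha> * Lp_norm p g"
    using Lp_mem_cmult(2)[OF p g] Linf_bound(2)[OF al] by simp
  finally show "Lp_norm p (\<lambda>t. \<alpha> t * g t) \<le> Linf_norm \<alpha> * Lp_norm p g" .
qed

locale part2 = part +
  fixes p :: real and alpha :: "nat \<Rightarrow> real \<Rightarrow> real"
  assumes p: "p \<ge> 1" and alpha: "\<forall>i\<in>{1..N}. Linf_mem (alpha i)"
begin

definition Lam where "Lam = (\<Sum>i=1..N. a i * Linf_norm (alpha i) powr p) powr (1 / p)"

definition Aop :: "(real \<Rightarrow> real) \<Rightarrow> real \<Rightarrow> real" where
  "Aop g = glue (\<lambda>i t. alpha i t * g t)"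

lemma Lam_nonneg: "Lam \<ge> 0" by (simp add: Lam_def)

lemma Lam_pow: "Lam powr p = (\<Sum>i=1..N. a i * Linf_norm (alpha i) powr p)"
proof -
  have "(\<Sum>i=1..N. a i * Linf_norm (alpha i) powr p) \<ge> 0"
  proof (rule sum_nonneg)
    fix i assume "i \<in> {1..N}"
    then have "a i > 0" by (rule ab(3))
    then show "0 \<le> a i * Linf_norm (alpha i) powr p" by simp
  qed
  then show ?thesis unfolding Lam_def using p by (simp add: powr_powr)
qed

lemma Aop_Lp:
  assumes g: "Lp_mem p g"
  shows "Lp_mem p (Aop g)" "Lp_norm p (Aop g) \<le> Lam * Lp_norm p g"
proof -
  have m: "Lp_mem p (\<lambda>t. alpha i t * g t)" if "i \<in> {1..N}" for i
    using Linf_mult_Lp(1)[OF p _ g] alpha that by auto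
  show "Lp_mem p (Aop g)" unfolding Aop_def by (rule glue_Lp(1)[OF p m])
  have "Lp_norm p (Aop g) powr p = (\<Sum>i=1..N. a i * Lp_norm p (\<lambda>t. alpha i t * g t) powr p)"
    unfolding Aop_def by (rule glue_Lp(2)[OF p m])
  also have "\<dots> \<le> (\<Sum>i=1..N. a i * (Linf_norm (alpha i) * Lp_norm p g) powr p)"
  proof (rule sum_mono)
    fix i assume i: "i \<in> {1..N}"
    have al: "Linf_mem (alpha i)" using alpha i by auto
    have "Lp_norm p (\<lambda>t. alpha i t * g t) powr p \<le> (Linf_norm (alpha i) * Lp_norm p g) powr p"
      using Linf_mult_Lp(2)[OF p al g] p by (intro powr_mono2) (auto simp: Lp_norm_nonneg)
    then show "a i * Lp_norm p (\<lambda>t. alpha i t * g t) powr p \<le> a i * (Linf_norm (alpha i) * Lp_norm p g) powr p"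
      using ab(3)[OF i] by (intro mult_left_mono) auto
  qed
  also have "\<dots> = (\<Sum>i=1..N. a i * Linf_norm (alpha i) powr p) * Lp_norm p g powr p"
    by (subst sum_distrib_right) (auto intro!: sum.cong simp: powr_mult Linf_bound(2) alpha Lp_norm_nonneg)
  also have "\<dots> = (Lam * Lp_norm p g) powr p"
    by (simp add: Lam_pow powr_mult Lam_nonneg Lp_norm_nonneg)
  finally have le: "Lp_norm p (Aop g) powr p \<le> (Lam * Lp_norm p g) powr p" .
  show "Lp_norm p (Aop g) \<le> Lam * Lp_norm p g"
  proof (rule ccontr)
    assume "\<not> ?thesis"
    then have "Lam * Lp_norm p g < Lp_norm p (Aop g)" by simp
    then have "(Lam * Lp_norm p g) powr p < Lp_norm p (Aop g) powr p"
      using p by (intro powr_less_mono2) (auto simp: Lam_nonneg Lp_norm_nonneg)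
    then show False using le by simp
  qed
qed

lemma Aop_lin: "Aop (\<lambda>t. c * g t + d * h t) y = c * Aop g y + d * Aop h y"
  unfolding Aop_def glue_def by (simp add: sum_distrib_left sum.distrib[symmetric] algebra_simps)

lemma Aop_diff: "Aop (\<lambda>t. g t - h t) y = Aop g y - Aop h y"
  using Aop_lin[of 1 g "-1" h y] by simp

lemma Top_eq: "Top n N a b alpha f g y = f y + Aop (\<lambda>t. g t - Mhat n f t) y"
  unfolding Top_def Aop_def glue_def by (simp add: mult.assoc)

lemma Top_diff: "Top n N a b alpha f g y - Top n N a b alpha f h y = Aop (\<lambda>t. g t - h t) y"
  unfolding Top_eq using Aop_diff[of "\<lambda>t. g t - Mhat n f t" "\<lambda>t. h t - Mhat n f t" y] by simp

lemma Top_contr: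
  assumes g: "Lp_mem p g" and h: "Lp_mem p h"
  shows "Lp_norm p (\<lambda>y. Top n N a b alpha f g y - Top n N a b alpha f h y) \<le> Lam * Lp_norm p (\<lambda>y. g y - h y)"
  unfolding Top_diff using Aop_Lp(2)[OF Lp_mem_diff[OF p g h]] by simp

lemma Top_mem:
  assumes f: "Lp_mem p f" and Mf: "Lp_mem p (Mhat n f)" and g: "Lp_mem p g"
  shows "Lp_mem p (Top n N a b alpha f g)"
proof -
  have "Lp_mem p (\<lambda>y. f y + Aop (\<lambda>t. g t - Mhat n f t) y)"
    by (rule Lp_mem_add[OF p f Aop_Lp(1)[OF Lp_mem_diff[OF p g Mf]]])
  then show ?thesis unfolding Top_eq[abs_def] .
qed

end

lemma Lp_abs:
  assumes p: "p \<ge> 1" and g: "Lp_mem p g"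
  shows "Lp_mem p (\<lambda>y. \<bar>g y\<bar>)" "Lp_norm p (\<lambda>y. \<bar>g y\<bar>) = Lp_norm p g"
proof -
  show "Lp_mem p (\<lambda>y. \<bar>g y\<bar>)"
    by (rule Lp_mem_bound(1)[OF p g]) (use Lp_mem_meas[OF g] in auto)
  show "Lp_norm p (\<lambda>y. \<bar>g y\<bar>) = Lp_norm p g" unfolding Lp_norm_def by simp
qed

lemma series_Lp:
  fixes g :: "nat \<Rightarrow> real \<Rightarrow> real"
  assumes p: "p \<ge> 1" and g: "\<And>m. Lp_mem p (g m)" and sm: "summable (\<lambda>m. Lp_norm p (g m))"
  shows "AE y in LI. summable (\<lambda>m. \<bar>g m y\<bar>)" "Lp_mem p (\<lambda>y. \<Sum>m. g m y)"
proof -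
  define P where "P K y = (\<Sum>m<K. \<bar>g m y\<bar>)" for K y
  define B where "B = (\<Sum>m. Lp_norm p (g m))"
  have gm: "g m \<in> borel_measurable LI" for m using g by (rule Lp_mem_meas)
  have P: "Lp_mem p (P K) \<and> Lp_norm p (P K) \<le> (\<Sum>m<K. Lp_norm p (g m))" for K
  proof (induction K)
    case 0 then show ?case by (simp add: P_def Lp_mem_zero[OF p] Lp_norm_def)
  next
    case (Suc K)
    have e: "P (Suc K) = (\<lambda>y. P K y + \<bar>g K y\<bar>)" by (simp add: P_def fun_eq_iff)
    have m: "Lp_mem p (P (Suc K))" unfolding e by (rule Lp_mem_add[OF p _ Lp_abs(1)[OF p g]]) (use Suc in simp)
    have "Lp_norm p (P (Suc K)) \<le> Lp_norm p (P K) + Lp_norm p (\<lambda>y. \<bar>g K y\<bar>)"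
      unfolding e by (rule minkowski[OF p _ Lp_abs(1)[OF p g]]) (use Suc in simp)
    also have "\<dots> \<le> (\<Sum>m<Suc K. Lp_norm p (g m))" using Suc Lp_abs(2)[OF p g] by simp
    finally show ?case using m by simp
  qed
  have Pm: "P K \<in> borel_measurable LI" for K using P by (auto intro: Lp_mem_meas)
  have PB: "Lp_norm p (P K) \<le> B" for K
    using P[of K] sum_le_suminf[OF sm, of "{..<K}"] by (auto simp: B_def Lp_norm_nonneg)
  have P0: "P K y \<ge> 0" for K y by (simp add: P_def sum_nonneg)
  have Pinc: "P K y \<le> P (Suc K) y" for K y by (simp add: P_def)
  define Q where "Q y = (SUP K. ennreal (P K y powr p))" for y
  have inc: "incseq (\<lambda>K y. ennreal (P K y powr p))"
  proof (intro incseq_SucI le_funI)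
    fix K y show "ennreal (P K y powr p) \<le> ennreal (P (Suc K) y powr p)"
      using p P0 Pinc by (intro ennreal_leI powr_mono2) auto
  qed
  have "(\<integral>\<^sup>+ y. Q y \<partial>LI) = (SUP K. (\<integral>\<^sup>+ y. ennreal (P K y powr p) \<partial>LI))"
    unfolding Q_def by (rule nn_integral_monotone_convergence_SUP[OF inc]) (use Pm in simp)
  also have "\<dots> \<le> ennreal (B powr p)"
  proof (rule SUP_least)
    fix K
    have "(\<integral>\<^sup>+ y. ennreal (P K y powr p) \<partial>LI) = ennreal (Lp_norm p (P K) powr p)"
      using Lp_nn_eq[OF p conjunct1[OF P[of K]]] P0 by simp
    also have "\<dots> \<le> ennreal (B powr p)"
      using PB[of K] p by (intro ennreal_leI powr_mono2) (auto simp: Lp_norm_nonneg)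
    finally show "(\<integral>\<^sup>+ y. ennreal (P K y powr p) \<partial>LI) \<le> ennreal (B powr p)" .
  qed
  finally have Qint: "(\<integral>\<^sup>+ y. Q y \<partial>LI) \<le> ennreal (B powr p)" .
  have Qm: "Q \<in> borel_measurable LI" unfolding Q_def using Pm by measurable
  have aeQ: "AE y in LI. Q y \<noteq> \<infinity>"
    by (rule nn_integral_PInf_AE[OF Qm]) (use Qint in \<open>auto simp: top_unique\<close>)
  have key: "summable (\<lambda>m. \<bar>g m y\<bar>) \<and> ennreal (\<bar>\<Sum>m. g m y\<bar> powr p) \<le> Q y" if Qy: "Q y \<noteq> \<infinity>" for y
  proof -
    define c where "c = enn2real (Q y)"
    have Qc: "Q y = ennreal c" using Qy by (simp add: c_def less_top)
    have c0: "c \<ge> 0" by (simp add: c_def)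
    have Pc: "P K y powr p \<le> c" for K
    proof -
      have "ennreal (P K y powr p) \<le> Q y" unfolding Q_def by (rule SUP_upper) simp
      then show ?thesis using Qc c0 by simp
    qed
    have Pc2: "P K y \<le> c powr (1 / p)" for K
    proof -
      have "P K y = (P K y powr p) powr (1 / p)" using p P0[of K y] by (simp add: powr_powr)
      also have "\<dots> \<le> c powr (1 / p)" using Pc[of K] p by (intro powr_mono2) auto
      finally show ?thesis .
    qed
    have sy: "summable (\<lambda>m. \<bar>g m y\<bar>)"
    proof (rule bounded_imp_summable)
      fix n show "(\<Sum>k\<le>n. \<bar>g k y\<bar>) \<le> c powr (1 / p)"
        using Pc2[of "Suc n"] by (simp add: P_def lessThan_Suc_atMost)
    qed simp
    define G where "G = (\<Sum>m. \<bar>g m y\<bar>)"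
    have G0: "G \<ge> 0" unfolding G_def by (intro suminf_nonneg sy) auto
    have SG: "\<bar>\<Sum>m. g m y\<bar> \<le> G" unfolding G_def by (rule summable_rabs[OF sy])
    have lim: "(\<lambda>K. P K y) \<longlonglongrightarrow> G" unfolding P_def G_def by (rule summable_LIMSEQ[OF sy])
    have Gc: "G powr p \<le> c"
    proof (cases "G = 0")
      case True then show ?thesis using c0 by simp
    next
      case False
      have "(\<lambda>K. P K y powr p) \<longlonglongrightarrow> G powr p"
        by (rule tendsto_powr[OF lim tendsto_const]) (use False in simp)
      then show ?thesis by (rule LIMSEQ_le_const2) (use Pc in auto)
    qed
    have "\<bar>\<Sum>m. g m y\<bar> powr p \<le> G powr p" using SG p by (intro powr_mono2) auto
    then have "ennreal (\<bar>\<Sum>m. g m y\<bar> powr p) \<le> ennreal c" using Gc by (intro ennreal_leI) simp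
    then show ?thesis using sy Qc by simp
  qed
  show "AE y in LI. summable (\<lambda>m. \<bar>g m y\<bar>)" using aeQ by eventually_elim (use key in blast)
  have Sm: "(\<lambda>y. \<Sum>m. g m y) \<in> borel_measurable LI" using gm by measurable
  have "(\<integral>\<^sup>+ y. ennreal (\<bar>\<Sum>m. g m y\<bar> powr p) \<partial>LI) \<le> (\<integral>\<^sup>+ y. Q y \<partial>LI)"
    by (rule nn_integral_mono_AE) (use aeQ key in \<open>auto elim: eventually_mono\<close>)
  also have "\<dots> < \<infinity>" using Qint by (simp add: le_less_trans)
  finally show "Lp_mem p (\<lambda>y. \<Sum>m. g m y)" using Lp_mem_nn[OF Sm] by simp
qed

context part2 begin

lemma pullback:
  assumes P: "AE t in LI. P t"
  shows "AE y in LI. \<forall>i\<in>{1..N}. y \<in> (\<lambda>t. a i * t + b i) ` {0..1} \<longrightarrow> P ((y - b i) / a i)"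
proof -
  from P obtain N0 where N0: "{x \<in> space LI. \<not> P x} \<subseteq> N0" "emeasure LI N0 = 0" "N0 \<in> sets LI"
    by (rule AE_E)
  define F where "F y = (\<Sum>i=1..N. indicator N0 ((y - b i) / a i) * indicator ((\<lambda>t. a i * t + b i) ` {0..1}) y :: ennreal)" for y
  have Fm: "F \<in> borel_measurable LI"
  proof -
    have "(\<lambda>y. indicator N0 ((y - b i) / a i) * indicator {b i..a i + b i} y :: ennreal) \<in> borel_measurable LI"
      if i: "i \<in> {1..N}" for i
      by (rule nn_affine_piece(1)[OF ab(3)[OF i] ab(4)[OF i] ab(5)[OF i]]) (use N0(3) in simp)
    then have "(\<lambda>y. \<Sum>i=1..N. indicator N0 ((y - b i) / a i) * indicator {b i..a i + b i} y :: ennreal) \<in> borel_measurable LI"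
      by (intro borel_measurable_sum) auto
    moreover have "F = (\<lambda>y. \<Sum>i=1..N. indicator N0 ((y - b i) / a i) * indicator {b i..a i + b i} y :: ennreal)"
      unfolding F_def by (intro ext sum.cong) (auto simp: img_eq)
    ultimately show ?thesis by simp
  qed
  have "(\<integral>\<^sup>+ y. F y \<partial>LI) = (\<Sum>i=1..N. ennreal (a i) * (\<integral>\<^sup>+ t. indicator N0 t \<partial>LI))"
    unfolding F_def by (rule glue_nn) (use N0(3) in simp)
  also have "\<dots> = 0" using N0(2) N0(3) by simp
  finally have "AE y in LI. F y = 0" using nn_integral_0_iff_AE[OF Fm] by simp
  then show ?thesis
  proof eventually_elim
    case (elim y)
    show ?case
    proof (intro ballI impI)
      fix i assume i: "i \<in> {1..N}" and y: "y \<in> (\<lambda>t. a i * t + b i) ` {0..1}"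
      have "indicator N0 ((y - b i) / a i) * indicator ((\<lambda>t. a i * t + b i) ` {0..1}) y = (0::ennreal)"
        using elim i unfolding F_def by (subst (asm) sum_eq_0_iff) auto
      then have nN: "(y - b i) / a i \<notin> N0" using y by (auto simp: indicator_def)
      obtain t where t: "t \<in> {0..1}" "y = a i * t + b i" using y by auto
      have "(y - b i) / a i = t" using t ab(3)[OF i] by simp
      then show "P ((y - b i) / a i)" using nN N0(1) t by auto
    qed
  qed
qed

lemma Aop_cong:
  assumes "\<And>t. t \<in> {0..1} \<Longrightarrow> g t = g' t"
  shows "Aop g y = Aop g' y"
  unfolding Aop_def glue_def
proof (intro sum.cong refl)
  fix i assume i: "i \<in> {1..N}"
  show "alpha i ((y - b i) / a i) * g ((y - b i) / a i) * indicator ((\<lambda>t. a i * t + b i) ` {0..1}) y =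
        alpha i ((y - b i) / a i) * g' ((y - b i) / a i) * indicator ((\<lambda>t. a i * t + b i) ` {0..1}) y"
  proof (cases "y \<in> (\<lambda>t. a i * t + b i) ` {0..1}")
    case True
    then obtain t where t: "t \<in> {0..1}" "y = a i * t + b i" by auto
    have "(y - b i) / a i = t" using t ab(3)[OF i] by simp
    then show ?thesis using assms t by simp
  qed simp
qed

lemma Aop_iter:
  assumes h: "Lp_mem p h"
  shows "Lp_mem p ((Aop ^^ m) h) \<and> Lp_norm p ((Aop ^^ m) h) \<le> Lam ^ m * Lp_norm p h"
proof (induction m)
  case 0 then show ?case using h by simp
next
  case (Suc m)
  have "Lp_norm p ((Aop ^^ Suc m) h) \<le> Lam * Lp_norm p ((Aop ^^ m) h)"
    using Aop_Lp(2) Suc by simp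
  also have "\<dots> \<le> Lam * (Lam ^ m * Lp_norm p h)"
    using Suc Lam_nonneg by (intro mult_left_mono) auto
  finally show ?case using Aop_Lp(1) Suc by simp
qed

lemma fixed_point:
  assumes L1: "Lam < 1" and h: "Lp_mem p h"
  defines "S \<equiv> (\<lambda>y. \<Sum>m. (Aop ^^ m) h y)"
  shows "Lp_mem p S" "AE y in LI. S y = h y + Aop S y"
proof -
  define gs where "gs m = (Aop ^^ m) h" for m
  have gsm: "Lp_mem p (gs m)" for m using Aop_iter[OF h] by (simp add: gs_def)
  have sm: "summable (\<lambda>m. Lp_norm p (gs m))"
  proof (rule summable_comparison_test)
    show "\<exists>N0. \<forall>m\<ge>N0. norm (Lp_norm p (gs m)) \<le> Lam ^ m * Lp_norm p h"
      using Aop_iter[OF h] by (auto simp: gs_def Lp_norm_nonneg)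
    show "summable (\<lambda>m. Lam ^ m * Lp_norm p h)"
      using L1 Lam_nonneg by (intro summable_mult2 summable_geometric) auto
  qed
  note ser = series_Lp[OF p gsm sm]
  show "Lp_mem p S" using ser(2) by (simp add: S_def gs_def)
  have ae2: "AE y in LI. \<forall>i\<in>{1..N}. y \<in> (\<lambda>t. a i * t + b i) ` {0..1} \<longrightarrow> summable (\<lambda>m. \<bar>gs m ((y - b i) / a i)\<bar>)"
    by (rule pullback[OF ser(1)])
  show "AE y in LI. S y = h y + Aop S y"
    using ser(1) ae2
  proof eventually_elim
    case (elim y)
    have s0: "summable (\<lambda>m. gs m y)" using elim(1) by (rule summable_rabs_cancel)
    have "S y = (\<Sum>m. gs m y)" by (simp add: S_def gs_def)
    also have "\<dots> = gs 0 y + (\<Sum>m. gs (Suc m) y)" using suminf_split_head[OF s0] by simp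
    also have "gs 0 y = h y" by (simp add: gs_def)
    also have "(\<Sum>m. gs (Suc m) y) = (\<Sum>m. \<Sum>i=1..N. alpha i ((y - b i) / a i) * gs m ((y - b i) / a i) * indicator ((\<lambda>t. a i * t + b i) ` {0..1}) y)"
      by (simp add: gs_def Aop_def glue_def)
    also have "\<dots> = (\<Sum>i=1..N. \<Sum>m. alpha i ((y - b i) / a i) * gs m ((y - b i) / a i) * indicator ((\<lambda>t. a i * t + b i) ` {0..1}) y)"
    proof (rule suminf_sum)
      fix i assume i: "i \<in> {1..N}"
      show "summable (\<lambda>m. alpha i ((y - b i) / a i) * gs m ((y - b i) / a i) * indicator ((\<lambda>t. a i * t + b i) ` {0..1}) y)"
      proof (cases "y \<in> (\<lambda>t. a i * t + b i) ` {0..1}")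
        case True
        then have "summable (\<lambda>m. gs m ((y - b i) / a i))" using elim(2) i by (auto intro: summable_rabs_cancel)
        then show ?thesis using True by (auto intro: summable_mult)
      qed simp
    qed
    also have "\<dots> = (\<Sum>i=1..N. alpha i ((y - b i) / a i) * S ((y - b i) / a i) * indicator ((\<lambda>t. a i * t + b i) ` {0..1}) y)"
    proof (rule sum.cong[OF refl])
      fix i assume i: "i \<in> {1..N}"
      show "(\<Sum>m. alpha i ((y - b i) / a i) * gs m ((y - b i) / a i) * indicator ((\<lambda>t. a i * t + b i) ` {0..1}) y) =
            alpha i ((y - b i) / a i) * S ((y - b i) / a i) * indicator ((\<lambda>t. a i * t + b i) ` {0..1}) y"
      proof (cases "y \<in> (\<lambda>t. a i * t + b i) ` {0..1}")
        case True
        then have "summable (\<lambda>m. gs m ((y - b i) / a i))" using elim(2) i by (auto intro: summable_rabs_cancel)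
        then show ?thesis using True by (simp add: suminf_mult S_def gs_def)
      qed simp
    qed
    also have "\<dots> = Aop S y" by (simp add: Aop_def glue_def)
    finally show ?case .
  qed
qed

end

context part2 begin

lemma uniq:
  assumes L1: "Lam < 1" and g1: "Lp_mem p g1" and g2: "Lp_mem p g2"
    and e1: "AE y in LI. g1 y = Top n N a b alpha f g1 y"
    and e2: "AE y in LI. g2 y = Top n N a b alpha f g2 y"
  shows "AE y in LI. g1 y = g2 y"
proof -
  have dm: "Lp_mem p (\<lambda>y. g1 y - g2 y)" by (rule Lp_mem_diff[OF p g1 g2])
  have ae: "AE y in LI. g1 y - g2 y = Aop (\<lambda>t. g1 t - g2 t) y"
    using e1 e2 by eventually_elim (simp add: Top_diff)
  have "Lp_norm p (\<lambda>y. g1 y - g2 y) = Lp_norm p (Aop (\<lambda>t. g1 t - g2 t))"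
    by (rule Lp_AE_cong(1)[OF _ _ ae]) (use Lp_mem_meas[OF dm] Lp_mem_meas[OF Aop_Lp(1)[OF dm]] in auto)
  also have "\<dots> \<le> Lam * Lp_norm p (\<lambda>y. g1 y - g2 y)" by (rule Aop_Lp(2)[OF dm])
  finally have "(1 - Lam) * Lp_norm p (\<lambda>y. g1 y - g2 y) \<le> 0" by (simp add: algebra_simps)
  then have "Lp_norm p (\<lambda>y. g1 y - g2 y) = 0"
    using L1 Lp_norm_nonneg[of p "\<lambda>y. g1 y - g2 y"] by (simp add: mult_le_0_iff)
  from Lp_norm_zero_AE[OF p dm this] show ?thesis by eventually_elim simp
qed

lemma main_assembly:
  assumes L1: "Lam < 1" and f: "Lp_mem p f"
    and M1: "\<And>f. Lp_mem p f \<Longrightarrow> Lp_mem p (Mhat n f)"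
    and M2: "\<And>f. Lp_mem p f \<Longrightarrow> Lp_norm p (Mhat n f) \<le> K * Lp_norm p f"
    and M3: "\<And>f1 f2 c d t. Lp_mem p f1 \<Longrightarrow> Lp_mem p f2 \<Longrightarrow> t \<in> {0..1} \<Longrightarrow>
               Mhat n (\<lambda>s. c * f1 s + d * f2 s) t = c * Mhat n f1 t + d * Mhat n f2 t"
  shows "(\<forall>g. Lp_mem p g \<longrightarrow> Lp_mem p (Top n N a b alpha f g))
    \<and> (\<forall>g h. Lp_mem p g \<and> Lp_mem p h \<longrightarrow>
          Lp_norm p (\<lambda>y. Top n N a b alpha f g y - Top n N a b alpha f h y)
            \<le> Lam * Lp_norm p (\<lambda>y. g y - h y))
    \<and> (\<exists>F :: (real \<Rightarrow> real) \<Rightarrow> real \<Rightarrow> real.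
         (\<forall>f'. Lp_mem p f' \<longrightarrow>
            Lp_mem p (F f')
            \<and> (AE y in LI. F f' y = Top n N a b alpha f' (F f') y)
            \<and> (\<forall>g. Lp_mem p g \<and> (AE y in LI. g y = Top n N a b alpha f' g y)
                   \<longrightarrow> (AE y in LI. g y = F f' y)))
         \<and> (\<forall>f1 f2 c d. Lp_mem p f1 \<and> Lp_mem p f2 \<longrightarrow>
              (AE y in LI. F (\<lambda>t. c * f1 t + d * f2 t) y = c * F f1 y + d * F f2 y))
         \<and> (\<exists>C. \<forall>f'. Lp_mem p f' \<longrightarrow> Lp_norm p (F f') \<le> C * Lp_norm p f'))"
proof (intro conjI allI impI)
  fix g assume "Lp_mem p g"
  then show "Lp_mem p (Top n N a b alpha f g)" using Top_mem[OF f M1[OF f]] by simp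
next
  fix g h assume "Lp_mem p g \<and> Lp_mem p h"
  then show "Lp_norm p (\<lambda>y. Top n N a b alpha f g y - Top n N a b alpha f h y) \<le> Lam * Lp_norm p (\<lambda>y. g y - h y)"
    using Top_contr by blast
next
  define H where "H f' = (\<lambda>y. f' y - Aop (Mhat n f') y)" for f'
  define F where "F f' = (\<lambda>y. \<Sum>m. (Aop ^^ m) (H f') y)" for f'
  have Hm: "Lp_mem p (H f')" if "Lp_mem p f'" for f'
    unfolding H_def by (rule Lp_mem_diff[OF p that Aop_Lp(1)[OF M1[OF that]]])
  have Fm: "Lp_mem p (F f')" if "Lp_mem p f'" for f'
    unfolding F_def by (rule fixed_point(1)[OF L1 Hm[OF that]])
  have TopH: "Top n N a b alpha f' g y = H f' y + Aop g y" for f' g y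
    unfolding Top_eq H_def Aop_diff by simp
  have Ffix: "AE y in LI. F f' y = Top n N a b alpha f' (F f') y" if "Lp_mem p f'" for f'
    using fixed_point(2)[OF L1 Hm[OF that]] unfolding TopH by (simp add: F_def)
  have Funiq: "AE y in LI. g y = F f' y"
    if "Lp_mem p f'" "Lp_mem p g" "AE y in LI. g y = Top n N a b alpha f' g y" for f' g
    by (rule uniq[OF L1 that(2) Fm[OF that(1)] that(3) Ffix[OF that(1)]])
  show "\<exists>F :: (real \<Rightarrow> real) \<Rightarrow> real \<Rightarrow> real.
         (\<forall>f'. Lp_mem p f' \<longrightarrow>
            Lp_mem p (F f')
            \<and> (AE y in LI. F f' y = Top n N a b alpha f' (F f') y)
            \<and> (\<forall>g. Lp_mem p g \<and> (AE y in LI. g y = Top n N a b alpha f' g y)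
                   \<longrightarrow> (AE y in LI. g y = F f' y)))
         \<and> (\<forall>f1 f2 c d. Lp_mem p f1 \<and> Lp_mem p f2 \<longrightarrow>
              (AE y in LI. F (\<lambda>t. c * f1 t + d * f2 t) y = c * F f1 y + d * F f2 y))
         \<and> (\<exists>C. \<forall>f'. Lp_mem p f' \<longrightarrow> Lp_norm p (F f') \<le> C * Lp_norm p f')"
  proof (intro exI[of _ F] conjI allI impI)
    fix f' assume f': "Lp_mem p f'"
    show "Lp_mem p (F f')" by (rule Fm[OF f'])
    show "AE y in LI. F f' y = Top n N a b alpha f' (F f') y" by (rule Ffix[OF f'])
    fix g assume "Lp_mem p g \<and> (AE y in LI. g y = Top n N a b alpha f' g y)"
    then show "AE y in LI. g y = F f' y" using Funiq[OF f'] by blast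
  next
    fix f1 f2 c d assume ff: "Lp_mem p f1 \<and> Lp_mem p f2"
    then have f1: "Lp_mem p f1" and f2: "Lp_mem p f2" by auto
    define G where "G = (\<lambda>y. c * F f1 y + d * F f2 y)"
    have f12: "Lp_mem p (\<lambda>t. c * f1 t + d * f2 t)"
      by (rule Lp_mem_add[OF p Lp_mem_cmult(1)[OF p f1] Lp_mem_cmult(1)[OF p f2]])
    have Gm: "Lp_mem p G" unfolding G_def
      by (rule Lp_mem_add[OF p Lp_mem_cmult(1)[OF p Fm[OF f1]] Lp_mem_cmult(1)[OF p Fm[OF f2]]])
    have TG: "Top n N a b alpha (\<lambda>t. c * f1 t + d * f2 t) G y
        = c * Top n N a b alpha f1 (F f1) y + d * Top n N a b alpha f2 (F f2) y" for y
    proof -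
      have "Aop (\<lambda>t. G t - Mhat n (\<lambda>t. c * f1 t + d * f2 t) t) y
          = Aop (\<lambda>t. c * (F f1 t - Mhat n f1 t) + d * (F f2 t - Mhat n f2 t)) y"
        by (rule Aop_cong) (simp add: G_def M3[OF f1 f2] algebra_simps)
      also have "\<dots> = c * Aop (\<lambda>t. F f1 t - Mhat n f1 t) y + d * Aop (\<lambda>t. F f2 t - Mhat n f2 t) y"
        by (rule Aop_lin)
      finally show ?thesis unfolding Top_eq by (simp add: algebra_simps)
    qed
    have "AE y in LI. G y = Top n N a b alpha (\<lambda>t. c * f1 t + d * f2 t) G y"
      using Ffix[OF f1] Ffix[OF f2]
    proof eventually_elim
      case (elim y)
      show ?case by (subst TG) (simp only: elim(1)[symmetric] elim(2)[symmetric] G_def)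
    qed
    from Funiq[OF f12 Gm this]
    show "AE y in LI. F (\<lambda>t. c * f1 t + d * f2 t) y = c * F f1 y + d * F f2 y"
      by eventually_elim (simp add: G_def)
  next
    show "\<exists>C. \<forall>f'. Lp_mem p f' \<longrightarrow> Lp_norm p (F f') \<le> C * Lp_norm p f'"
    proof (intro exI allI impI)
      fix f' assume f': "Lp_mem p f'"
      have Mf: "Lp_mem p (Mhat n f')" by (rule M1[OF f'])
      have AMf: "Lp_mem p (Aop (Mhat n f'))" by (rule Aop_Lp(1)[OF Mf])
      have AF: "Lp_mem p (Aop (F f'))" by (rule Aop_Lp(1)[OF Fm[OF f']])
      have ae: "AE y in LI. F f' y = H f' y + Aop (F f') y"
        using Ffix[OF f'] by eventually_elim (simp add: TopH)
      have "Lp_norm p (F f') = Lp_norm p (\<lambda>y. H f' y + Aop (F f') y)"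
        by (rule Lp_AE_cong(1)[OF _ _ ae])
           (use Lp_mem_meas[OF Fm[OF f']] Lp_mem_meas[OF Lp_mem_add[OF p Hm[OF f'] AF]] in auto)
      also have "\<dots> \<le> Lp_norm p (H f') + Lp_norm p (Aop (F f'))"
        by (rule minkowski[OF p Hm[OF f'] AF])
      also have "Lp_norm p (H f') \<le> Lp_norm p f' + Lp_norm p (Aop (Mhat n f'))"
        unfolding H_def by (rule minkowski_diff[OF p f' AMf])
      also have "Lp_norm p (Aop (Mhat n f')) \<le> Lam * (K * Lp_norm p f')"
        using Aop_Lp(2)[OF Mf] M2[OF f'] Lam_nonneg by (meson mult_left_mono order_trans)
      also have "Lp_norm p (Aop (F f')) \<le> Lam * Lp_norm p (F f')" by (rule Aop_Lp(2)[OF Fm[OF f']])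
      finally have "(1 - Lam) * Lp_norm p (F f') \<le> (1 + Lam * K) * Lp_norm p f'"
        by (simp add: algebra_simps)
      then show "Lp_norm p (F f') \<le> ((1 + Lam * K) / (1 - Lam)) * Lp_norm p f'"
        using L1 by (simp add: field_simps)
    qed
  qed
qed

end

lemma neg_binom_sums:
  fixes x :: real
  assumes x0: "0 \<le> x" and x1: "x < 1"
  shows "(\<lambda>k. real ((k + m) choose k) * x ^ k) sums (1 / (1 - x) ^ Suc m)"
proof -
  have "\<bar>-x\<bar> < 1" using x0 x1 by simp
  from gen_binomial_real[OF this, of "- real (Suc m)"]
  have s: "(\<lambda>k. (- real (Suc m) gchoose k) * (- x) ^ k) sums (1 + - x) powr (- real (Suc m))" .
  have e1: "(- real (Suc m) gchoose k) * (- x) ^ k = real ((k + m) choose k) * x ^ k" for k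
  proof -
    have "(- real (Suc m) gchoose k) = (-1) ^ k * ((real (Suc m) + real k - 1) gchoose k)"
      by (rule gbinomial_minus)
    also have "real (Suc m) + real k - 1 = real (k + m)" by simp
    also have "(real (k + m) gchoose k) = real ((k + m) choose k)" by (simp add: binomial_gbinomial)
    finally show ?thesis by (simp add: power_minus')
  qed
  have e2: "(1 + - x) powr (- real (Suc m)) = 1 / (1 - x) ^ Suc m"
  proof -
    have "(1 - x) powr (real (Suc m)) = (1 - x) ^ Suc m" by (rule powr_realpow) (use x1 in simp)
    then show ?thesis by (subst powr_minus) (simp add: divide_inverse)
  qed
  show ?thesis using s unfolding e1 e2 .
qed

lemma binom_id:
  "Suc (Suc m) * Suc m * (Suc (Suc (k + m)) choose k)
     = ((k + m) choose k) * Suc (k + m) * Suc (Suc (k + m))"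
proof -
  have a0: "Suc (Suc (k + m)) * (Suc (k + m) choose Suc m) = (Suc (Suc (k + m)) choose Suc (Suc m)) * Suc (Suc m)"
    by (rule Suc_times_binomial_eq)
  have b0: "Suc (k + m) * ((k + m) choose m) = (Suc (k + m) choose Suc m) * Suc m"
    by (rule Suc_times_binomial_eq)
  have s1: "Suc (Suc (k + m)) choose k = Suc (Suc (k + m)) choose Suc (Suc m)"
    using binomial_symmetric[of k "Suc (Suc (k + m))"] by simp
  have s2: "(k + m) choose k = (k + m) choose m"
    using binomial_symmetric[of k "k + m"] by simp
  have "Suc (Suc m) * Suc m * (Suc (Suc (k + m)) choose k)
      = ((Suc (Suc (k + m)) choose Suc (Suc m)) * Suc (Suc m)) * Suc m"
    unfolding s1 by (simp only: mult_ac)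
  also have "\<dots> = Suc (Suc (k + m)) * ((Suc (k + m) choose Suc m) * Suc m)"
    unfolding a0[symmetric] by (simp only: mult_ac)
  also have "\<dots> = Suc (Suc (k + m)) * (Suc (k + m) * ((k + m) choose m))"
    unfolding b0 by simp
  also have "\<dots> = ((k + m) choose k) * Suc (k + m) * Suc (Suc (k + m))"
    unfolding s2 by (simp only: mult_ac)
  finally show ?thesis .
qed

definition lpt :: "nat \<Rightarrow> nat \<Rightarrow> real" where
  "lpt n k = real k / real (k + n)"

lemma Ik_lpt: "Ik n k = {lpt n k .. lpt n (Suc k)}"
  by (simp add: Ik_def lpt_def add_ac)

lemma lpt_0: "lpt n 0 = 0" by (simp add: lpt_def)

lemma lpt_ge0: "lpt n k \<ge> 0" by (simp add: lpt_def)

lemma lpt_lt1: "n \<ge> 1 \<Longrightarrow> lpt n k < 1" by (simp add: lpt_def)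

lemma lpt_diff: "n \<ge> 1 \<Longrightarrow> lpt n (Suc k) - lpt n k = real n / (real (k + n) * real (k + n + 1))"
  by (simp add: lpt_def field_simps)

lemma lpt_strict: "n \<ge> 1 \<Longrightarrow> lpt n k < lpt n (Suc k)"
proof -
  assume n: "n \<ge> 1"
  have "real n / (real (k + n) * real (k + n + 1)) > 0" using n by (intro divide_pos_pos mult_pos_pos) auto
  then show ?thesis using lpt_diff[OF n, of k] by linarith
qed

lemma lpt_strict_mono: "n \<ge> 1 \<Longrightarrow> strict_mono (lpt n)"
  by (rule strict_monoI_Suc) (rule lpt_strict)

lemma field_helper: "D \<noteq> 0 \<Longrightarrow> a * b * X * (c / D) = (a * c * b) / D * (X::real)"
  by (simp add: field_simps)

lemma mhat_len:
  assumes n: "n \<ge> 1"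
  shows "mhat n k x * (lpt n (Suc k) - lpt n k) = real ((k + (n - 1)) choose k) * x ^ k * (1 - x) ^ n"
proof -
  obtain m where m: "n = Suc m" using n by (cases n) auto
  have bi: "real (Suc (Suc m)) * real (Suc m) * real (Suc (Suc (k + m)) choose k)
     = real ((k + m) choose k) * (real (Suc (k + m)) * real (Suc (Suc (k + m))))"
    using binom_id[of m k] by (metis of_nat_mult mult.assoc)
  have D: "real (Suc (k + m)) * real (Suc (Suc (k + m))) \<noteq> 0" by simp
  have "mhat n k x * (lpt n (Suc k) - lpt n k)
      = real (Suc (Suc m)) * real (Suc (Suc (k + m)) choose k) * (x ^ k * (1 - x) ^ n)
        * (real (Suc m) / (real (Suc (k + m)) * real (Suc (Suc (k + m)))))"
    unfolding lpt_diff[OF n] unfolding mhat_def m by (simp add: ac_simps)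
  also have "\<dots> = (real (Suc (Suc m)) * real (Suc m) * real (Suc (Suc (k + m)) choose k))
        / (real (Suc (k + m)) * real (Suc (Suc (k + m)))) * (x ^ k * (1 - x) ^ n)"
    by (rule field_helper[OF D])
  also have "\<dots> = real ((k + m) choose k) * (x ^ k * (1 - x) ^ n)"
    unfolding bi using D by simp
  finally show ?thesis using m by (simp add: mult.assoc)
qed

lemma mhat_nonneg: "x \<in> {0..1} \<Longrightarrow> mhat n k x \<ge> 0"
  by (simp add: mhat_def)

lemma mhat_at1: "n \<ge> 1 \<Longrightarrow> mhat n k 1 = 0"
  by (simp add: mhat_def)

lemma beta_nat:
  "((\<lambda>t::real. t ^ k * (1 - t) ^ n) has_integral (fact k * fact n / fact (k + n + 1))) {0..1}"
proof -
  have B: "((\<lambda>t. t powr (real k + 1 - 1) * (1 - t) powr (real n + 1 - 1)) has_integral Beta (real k + 1) (real n + 1)) {0..1}"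
    by (rule has_integral_Beta_real) auto
  have "Beta (real k + 1) (real n + 1) = fact k * fact n / fact (k + n + 1)"
  proof -
    have g1: "Gamma (real k + 1) = fact k" using Gamma_fact[of k, where 'a=real] by (simp add: add.commute)
    have g2: "Gamma (real n + 1) = fact n" using Gamma_fact[of n, where 'a=real] by (simp add: add.commute)
    have g3: "Gamma (real k + 1 + (real n + 1)) = fact (k + n + 1)"
      using Gamma_fact[of "k + n + 1", where 'a=real] by (simp add: add_ac)
    show ?thesis unfolding Beta_def g1 g2 g3 ..
  qed
  moreover have "((\<lambda>t::real. t ^ k * (1 - t) ^ n) has_integral Beta (real k + 1) (real n + 1)) {0..1}"
  proof (rule has_integral_spike[OF _ _ B])
    show "negligible {0, 1::real}" by simp
    fix t :: real assume "t \<in> {0..1} - {0, 1}"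
    then have "0 < t" "t < 1" by auto
    then show "t ^ k * (1 - t) ^ n = t powr (real k + 1 - 1) * (1 - t) powr (real n + 1 - 1)"
      by (simp add: powr_realpow)
  qed
  ultimately show ?thesis by simp
qed

lemma mhat_has_integral: "(mhat n k has_integral 1) {0..1}"
proof -
  have "((\<lambda>t. real (n + 1) * real ((k + n + 1) choose k) * (t ^ k * (1 - t) ^ n)) has_integral
      real (n + 1) * real ((k + n + 1) choose k) * (fact k * fact n / fact (k + n + 1))) {0..1}"
    by (rule has_integral_mult_right[OF beta_nat])
  moreover have "real (n + 1) * real ((k + n + 1) choose k) * (fact k * fact n / fact (k + n + 1)) = (1::real)"
  proof -
    have c: "real ((k + n + 1) choose k) = fact (k + n + 1) / (fact k * fact (n + 1))"
      by (subst binomial_fact) (auto simp: add_ac)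
    have f: "(fact (n + 1) :: real) = real (n + 1) * fact n" by simp
    have h: "r * (A / (B * (r * C))) * (B * C / A) = 1"
      if "A \<noteq> 0" "B \<noteq> 0" "C \<noteq> 0" "r \<noteq> 0" for A B C r :: real
      using that by (simp add: field_simps)
    show ?thesis unfolding c f by (rule h) auto
  qed
  moreover have "(\<lambda>t. real (n + 1) * real ((k + n + 1) choose k) * (t ^ k * (1 - t) ^ n)) = mhat n k"
    by (auto simp: mhat_def fun_eq_iff ac_simps)
  ultimately show ?thesis by simp
qed

lemma mhat_nn_integral: "(\<integral>\<^sup>+ x. ennreal (mhat n k x) \<partial>LI) = 1"
proof -
  have "(\<integral>\<^sup>+ x. ennreal (mhat n k x) \<partial>LI) = (\<integral>\<^sup>+ x. ennreal (mhat n k x) * indicator {0..1} x \<partial>lebesgue)"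
    by (rule nn_integral_restrict_space) simp
  also have "\<dots> = (\<integral>\<^sup>+ x. ennreal (mhat n k x) * indicator {0..1} x \<partial>lborel)"
    by (rule nn_integral_completion)
  also have "\<dots> = (\<integral>\<^sup>+ x. ennreal (indicator {0..1} x * mhat n k x) \<partial>lborel)"
    by (intro nn_integral_cong) (auto simp: indicator_def)
  also have "\<dots> = ennreal 1"
    by (rule nn_integral_has_integral_lebesgue[OF _ mhat_has_integral]) (auto simp: mhat_nonneg)
  finally show ?thesis by simp
qed

lemma Ik_sub: "n \<ge> 1 \<Longrightarrow> Ik n k \<subseteq> {0..1}"
  unfolding Ik_lpt using lpt_ge0[of n k] lpt_lt1[of n "Suc k"] by auto

lemma Ik_sets[measurable]: "Ik n k \<in> sets LI"
proof -
  have "Ik n k \<inter> {0..1} \<in> sets LI" by (rule sets_restrict_space_iff[THEN iffD2]) (auto simp: Ik_def)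
  moreover have "Ik n k \<inter> {0..1} \<in> sets LI \<Longrightarrow> Ik n k \<in> sets LI"
  proof (cases "n \<ge> 1")
    case True then show "Ik n k \<inter> {0..1} \<in> sets LI \<Longrightarrow> Ik n k \<in> sets LI" using Ik_sub[OF True] by (simp add: Int_absorb2)
  next
    case False then have "n = 0" by simp
    then show "Ik n k \<inter> {0..1} \<in> sets LI \<Longrightarrow> Ik n k \<in> sets LI" 
      by (cases k) (auto simp: Ik_def)
  qed
  ultimately show ?thesis by blast
qed

lemma Ik_measure: "n \<ge> 1 \<Longrightarrow> emeasure LI (Ik n k) = ennreal (lpt n (Suc k) - lpt n k)"
proof -
  assume n: "n \<ge> 1"
  have "emeasure LI (Ik n k) = emeasure lebesgue (Ik n k)"
    using Ik_sub[OF n] by (subst emeasure_restrict_space) (auto simp: Ik_def)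
  also have "\<dots> = emeasure lborel (Ik n k)" by (simp add: Ik_def)
  also have "\<dots> = ennreal (lpt n (Suc k) - lpt n k)"
    unfolding Ik_lpt using lpt_strict[OF n, of k] by simp
  finally show ?thesis .
qed

lemma id_meas_LI[measurable]: "(\<lambda>x::real. x) \<in> borel_measurable LI"
  using id_borel_measurable_lebesgue_on[of "{0..1::real}"] by (simp add: id_def)

lemma mhat_meas[measurable]: "mhat n k \<in> borel_measurable LI"
  unfolding mhat_def[abs_def] by measurable

definition Ks :: "nat \<Rightarrow> real \<Rightarrow> nat set" where
  "Ks n s = {k. s \<in> Ik n k}"

lemma Ks_close:
  assumes n: "n \<ge> 1" and j: "j \<in> Ks n s" and k: "k \<in> Ks n s"
  shows "j \<le> Suc k"
proof -
  have "lpt n j \<le> lpt n (Suc k)" using j k by (auto simp: Ks_def Ik_lpt)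
  then show ?thesis using strict_mono_less_eq[OF lpt_strict_mono[OF n], of j "Suc k"] by simp
qed

lemma Ks_sub:
  assumes n: "n \<ge> 1" and j: "j \<in> Ks n s"
  shows "Ks n s \<subseteq> {..Suc j}"
  using Ks_close[OF n _ j] by auto

lemma Ks_finite: "n \<ge> 1 \<Longrightarrow> finite (Ks n s)"
proof (cases "Ks n s = {}")
  case False
  then obtain j where "j \<in> Ks n s" by auto
  moreover assume "n \<ge> 1"
  ultimately show ?thesis using Ks_sub[of n j s] finite_subset[of "Ks n s" "{..Suc j}"] by simp
qed simp

lemma Ks_card: "n \<ge> 1 \<Longrightarrow> card (Ks n s) \<le> 2"
proof (cases "Ks n s = {}")
  case False
  assume n: "n \<ge> 1"
  define j where "j = Min (Ks n s)"
  have jK: "j \<in> Ks n s" unfolding j_def using Ks_finite[OF n] False by (rule Min_in)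
  have "Ks n s \<subseteq> {j, Suc j}"
  proof
    fix k assume k: "k \<in> Ks n s"
    have "j \<le> k" unfolding j_def using Ks_finite[OF n] k by simp
    moreover have "k \<le> Suc j" by (rule Ks_close[OF n k jK])
    ultimately show "k \<in> {j, Suc j}" by auto
  qed
  then have "card (Ks n s) \<le> card {j, Suc j}" by (rule card_mono[rotated]) simp
  then show ?thesis by simp
qed simp

lemma Hn_terms_zero: "k \<notin> Ks n s \<Longrightarrow> mhat n k x * indicator (Ik n k) s = 0"
  by (simp add: Ks_def indicator_def)

lemma Hn_summable: "n \<ge> 1 \<Longrightarrow> summable (\<lambda>k. mhat n k x * indicator (Ik n k) s)"
  by (rule summable_finite[OF Ks_finite[of n s]]) (auto simp: Ks_def indicator_def)

lemma Hn_finite: "n \<ge> 1 \<Longrightarrow> Hn n x s = (\<Sum>k\<in>Ks n s. mhat n k x)"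
  unfolding Hn_def
  by (subst suminf_finite[OF Ks_finite[of n s]]) (auto intro: Hn_terms_zero simp: Ks_def indicator_def)

lemma Hn_nonneg: "n \<ge> 1 \<Longrightarrow> x \<in> {0..1} \<Longrightarrow> Hn n x s \<ge> 0"
  unfolding Hn_finite by (auto intro!: sum_nonneg mhat_nonneg)

lemma Hn_at1: "n \<ge> 1 \<Longrightarrow> Hn n 1 s = 0"
  unfolding Hn_finite by (simp add: mhat_at1)

lemma mhat_sums:
  assumes x0: "0 \<le> x" and x1: "x < 1"
  shows "(\<lambda>k. mhat n k x) sums (real (n + 1) * (1 - x) ^ n / (1 - x) ^ Suc (n + 1))"
proof -
  have "(\<lambda>k. real (n + 1) * (1 - x) ^ n * (real ((k + (n + 1)) choose k) * x ^ k)) sums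
        (real (n + 1) * (1 - x) ^ n * (1 / (1 - x) ^ Suc (n + 1)))"
    by (rule sums_mult[OF neg_binom_sums[OF x0 x1]])
  then show ?thesis by (simp add: mhat_def ac_simps)
qed

lemma mhat_summable: "0 \<le> x \<Longrightarrow> x < 1 \<Longrightarrow> summable (\<lambda>k. mhat n k x)"
  using mhat_sums sums_summable by blast

lemma Hn_bound:
  assumes n: "n \<ge> 1" and x0: "0 \<le> x" and x1: "x < 1"
  shows "Hn n x s \<le> (\<Sum>k. mhat n k x)"
  unfolding Hn_finite[OF n]
  by (rule sum_le_suminf[OF mhat_summable[OF x0 x1]]) (use x0 x1 in \<open>auto intro: mhat_nonneg Ks_finite[OF n]\<close>)

lemma Hn_meas_s[measurable]: "(\<lambda>s. Hn n x s) \<in> borel_measurable LI"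
  unfolding Hn_def by measurable

lemma Hn_int1:
  assumes n: "n \<ge> 1" and x0: "0 \<le> x" and x1: "x < 1"
  shows "(\<integral>\<^sup>+ s. ennreal (Hn n x s) \<partial>LI) = 1"
proof -
  have e1: "ennreal (Hn n x s) = (\<Sum>k. ennreal (mhat n k x * indicator (Ik n k) s))" for s
    unfolding Hn_def
    by (rule suminf_ennreal2[symmetric]) (use Hn_summable[OF n] x0 x1 mhat_nonneg in auto)
  have "(\<integral>\<^sup>+ s. ennreal (Hn n x s) \<partial>LI) = (\<Sum>k. \<integral>\<^sup>+ s. ennreal (mhat n k x * indicator (Ik n k) s) \<partial>LI)"
    unfolding e1 by (rule nn_integral_suminf) measurable
  also have "\<dots> = (\<Sum>k. ennreal (mhat n k x * (lpt n (Suc k) - lpt n k)))"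
  proof (intro suminf_cong)
    fix k
    have "(\<integral>\<^sup>+ s. ennreal (mhat n k x * indicator (Ik n k) s) \<partial>LI) = (\<integral>\<^sup>+ s. ennreal (mhat n k x) * indicator (Ik n k) s \<partial>LI)"
      by (intro nn_integral_cong) (auto simp: indicator_def)
    also have "\<dots> = ennreal (mhat n k x) * emeasure LI (Ik n k)"
      by (rule nn_integral_cmult_indicator) simp
    also have "\<dots> = ennreal (mhat n k x * (lpt n (Suc k) - lpt n k))"
      unfolding Ik_measure[OF n] using mhat_nonneg[of x n k] x0 x1 lpt_strict[OF n, of k]
      by (subst ennreal_mult) auto
    finally show "(\<integral>\<^sup>+ s. ennreal (mhat n k x * indicator (Ik n k) s) \<partial>LI) = ennreal (mhat n k x * (lpt n (Suc k) - lpt n k))" .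
  qed
  also have "\<dots> = (\<Sum>k. ennreal (real ((k + (n - 1)) choose k) * x ^ k * (1 - x) ^ n))"
    by (simp add: mhat_len[OF n])
  also have "\<dots> = ennreal 1"
  proof -
    have "(\<lambda>k. real ((k + (n - 1)) choose k) * x ^ k * (1 - x) ^ n) sums (1 / (1 - x) ^ Suc (n - 1) * (1 - x) ^ n)"
      by (rule sums_mult2[OF neg_binom_sums[OF x0 x1]])
    moreover have "1 / (1 - x) ^ Suc (n - 1) * (1 - x) ^ n = 1" using n x1 by simp
    ultimately have "(\<lambda>k. real ((k + (n - 1)) choose k) * x ^ k * (1 - x) ^ n) sums 1" by simp
    then have "(\<lambda>k. ennreal (real ((k + (n - 1)) choose k) * x ^ k * (1 - x) ^ n)) sums ennreal 1"
      using x0 x1 by (subst sums_ennreal) auto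
    then show ?thesis by (rule sums_unique[symmetric])
  qed
  finally show ?thesis by simp
qed

lemma Hn_meas_pair: "(\<lambda>z. Hn n (fst z) (snd z)) \<in> borel_measurable (LI \<Otimes>\<^sub>M LI)"
  unfolding Hn_def by measurable

lemma finite_measure_LI: "finite_measure LI"
  by (rule finite_measure_lebesgue_on) simp

lemma Lp_L1:
  assumes p: "p \<ge> 1" and f: "Lp_mem p f"
  shows "integrable LI f"
proof -
  have fm: "f \<in> borel_measurable LI" using f by (rule Lp_mem_meas)
  have fi: "integrable LI (\<lambda>x. \<bar>f x\<bar> powr p)" using f by (simp add: Lp_mem_def)
  have ci: "integrable LI (\<lambda>x. 1 :: real)"
    using finite_measure.integrable_const[OF finite_measure_LI] by simp
  have bnd: "\<bar>f x\<bar> \<le> 1 + \<bar>f x\<bar> powr p" for x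
  proof (cases "\<bar>f x\<bar> \<le> 1")
    case False
    then have "\<bar>f x\<bar> powr 1 \<le> \<bar>f x\<bar> powr p" using p by (intro powr_mono) auto
    then show ?thesis using False by simp
  qed (simp add: add_increasing2)
  show ?thesis
    by (rule Bochner_Integration.integrable_bound[OF Bochner_Integration.integrable_add[OF ci fi]])
       (use fm bnd in auto)
qed

context
  fixes n :: nat and x :: real
  assumes n: "n \<ge> 1" and x0: "0 \<le> x" and x1: "x < 1"
begin

definition "Bd = (\<Sum>k. mhat n k x)"

lemma Hn_int_mult:
  assumes g: "integrable LI g"
  shows "integrable LI (\<lambda>s. Hn n x s * g s)"
proof -
  have gm: "g \<in> borel_measurable LI" using g by simp
  show ?thesis
  proof (rule Bochner_Integration.integrable_bound[OF integrable_mult_right[OF integrable_abs[OF g], of Bd]])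
    show "(\<lambda>s. Hn n x s * g s) \<in> borel_measurable LI" using gm by measurable
    show "AE s in LI. norm (Hn n x s * g s) \<le> norm (Bd * \<bar>g s\<bar>)"
    proof (intro AE_I2)
      fix s
      have h0: "Hn n x s \<ge> 0" using Hn_nonneg[OF n] x0 x1 by simp
      have "Hn n x s \<le> Bd" unfolding Bd_def by (rule Hn_bound[OF n x0 x1])
      then have "Hn n x s * \<bar>g s\<bar> \<le> Bd * \<bar>g s\<bar>" by (intro mult_right_mono) auto
      moreover have "Bd \<ge> 0" unfolding Bd_def
        by (rule suminf_nonneg[OF mhat_summable[OF x0 x1]]) (use x0 x1 mhat_nonneg in auto)
      ultimately show "norm (Hn n x s * g s) \<le> norm (Bd * \<bar>g s\<bar>)" using h0 by (simp add: abs_mult)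
    qed
  qed
qed

lemma jensen_Mhat:
  assumes p: "p \<ge> 1" and f: "Lp_mem p f"
  shows "\<bar>Mhat n f x\<bar> powr p \<le> (\<integral>s. Hn n x s * \<bar>f s\<bar> powr p \<partial>LI)"
proof -
  define M where "M = density LI (\<lambda>s. ennreal (Hn n x s))"
  have fm: "f \<in> borel_measurable LI" using f by (rule Lp_mem_meas)
  have fi: "integrable LI f" by (rule Lp_L1[OF p f])
  have fpi: "integrable LI (\<lambda>s. \<bar>f s\<bar> powr p)" using f by (simp add: Lp_mem_def)
  have Hnn: "AE s in LI. 0 \<le> Hn n x s" using Hn_nonneg[OF n] x0 x1 by simp
  have PS: "prob_space M"
  proof (rule prob_spaceI)
    have "emeasure M (space M) = (\<integral>\<^sup>+ s. ennreal (Hn n x s) * indicator (space LI) s \<partial>LI)"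
      unfolding M_def by (subst emeasure_density) auto
    also have "\<dots> = (\<integral>\<^sup>+ s. ennreal (Hn n x s) \<partial>LI)"
      by (intro nn_integral_cong) (auto simp: indicator_def)
    also have "\<dots> = 1" by (rule Hn_int1[OF n x0 x1])
    finally show "emeasure M (space M) = 1" .
  qed
  have iM: "integrable M f" unfolding M_def
    by (subst integrable_density) (use fm Hnn Hn_int_mult[OF fi] in auto)
  have iMq: "integrable M (\<lambda>s. \<bar>f s\<bar> powr p)" unfolding M_def
    by (subst integrable_density) (use fm Hnn Hn_int_mult[OF fpi] in auto)
  have J: "\<bar>integral\<^sup>L M f\<bar> powr p \<le> integral\<^sup>L M (\<lambda>s. \<bar>f s\<bar> powr p)"
    using prob_space.jensens_inequality[OF PS iM _ _ iMq convex_abs_powr[OF p], of 0 0] by simp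
  have e1: "integral\<^sup>L M f = Mhat n f x" unfolding M_def Mhat_def
    by (subst integral_density) (use fm Hnn in auto)
  have e2: "integral\<^sup>L M (\<lambda>s. \<bar>f s\<bar> powr p) = (\<integral>s. Hn n x s * \<bar>f s\<bar> powr p \<partial>LI)" unfolding M_def
    by (subst integral_density) (use fm Hnn in auto)
  show ?thesis using J unfolding e1 e2 .
qed

end

lemma Hn_meas_x[measurable]: "(\<lambda>x. Hn n x s) \<in> borel_measurable LI"
  unfolding Hn_def by measurable

lemma sigma_finite_LI: "sigma_finite_measure LI"
  using finite_measure_LI by (simp add: finite_measure_def)

lemma Mhat_meas:
  assumes n: "n \<ge> 1" and fm: "f \<in> borel_measurable LI"
  shows "Mhat n f \<in> borel_measurable LI"
proof -
  have "(\<lambda>z. Hn n (fst z) (snd z) * f (snd z)) \<in> borel_measurable (LI \<Otimes>\<^sub>M LI)"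
    using Hn_meas_pair[of n] fm by measurable
  then have "case_prod (\<lambda>x s. Hn n x s * f s) \<in> borel_measurable (LI \<Otimes>\<^sub>M LI)"
    by (simp add: case_prod_beta')
  from sigma_finite_measure.borel_measurable_lebesgue_integral[OF sigma_finite_LI this]
  show ?thesis unfolding Mhat_def[abs_def] .
qed

lemma Hn_x_int:
  assumes n: "n \<ge> 1"
  shows "(\<integral>\<^sup>+ x. ennreal (Hn n x s) \<partial>LI) \<le> 2"
proof -
  have "(\<integral>\<^sup>+ x. ennreal (Hn n x s) \<partial>LI) = (\<integral>\<^sup>+ x. (\<Sum>k\<in>Ks n s. ennreal (mhat n k x)) \<partial>LI)"
  proof (intro nn_integral_cong)
    fix x assume "x \<in> space LI"
    then have "x \<in> {0..1}" by simp
    then show "ennreal (Hn n x s) = (\<Sum>k\<in>Ks n s. ennreal (mhat n k x))"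
      unfolding Hn_finite[OF n] by (subst sum_ennreal) (auto intro: mhat_nonneg)
  qed
  also have "\<dots> = (\<Sum>k\<in>Ks n s. (\<integral>\<^sup>+ x. ennreal (mhat n k x) \<partial>LI))"
    by (rule nn_integral_sum) measurable
  also have "\<dots> = of_nat (card (Ks n s))" by (simp add: mhat_nn_integral)
  also have "\<dots> \<le> of_nat 2" by (rule of_nat_mono[OF Ks_card[OF n, of s]])
  also have "(of_nat 2 :: ennreal) = 2" by simp
  finally show ?thesis .
qed

lemma Mhat_at1:
  assumes n: "n \<ge> 1"
  shows "Mhat n f 1 = 0"
  unfolding Mhat_def using Hn_at1[OF n] by simp

lemma Mhat_nn_bound:
  assumes n: "n \<ge> 1" and p: "p \<ge> 1" and f: "Lp_mem p f"
  shows "(\<integral>\<^sup>+ x. ennreal (\<bar>Mhat n f x\<bar> powr p) \<partial>LI) \<le> 2 * (\<integral>\<^sup>+ s. ennreal (\<bar>f s\<bar> powr p) \<partial>LI)"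
proof -
  have fm: "f \<in> borel_measurable LI" using f by (rule Lp_mem_meas)
  have fpi: "integrable LI (\<lambda>s. \<bar>f s\<bar> powr p)" using f by (simp add: Lp_mem_def)
  interpret P: pair_sigma_finite LI LI
    unfolding pair_sigma_finite_def using sigma_finite_LI by simp
  have pt: "ennreal (\<bar>Mhat n f x\<bar> powr p) \<le> (\<integral>\<^sup>+ s. ennreal (Hn n x s) * ennreal (\<bar>f s\<bar> powr p) \<partial>LI)"
    if x: "x \<in> space LI" for x
  proof (cases "x = 1")
    case True then show ?thesis using Mhat_at1[OF n] by simp
  next
    case False
    then have x0: "0 \<le> x" and x1: "x < 1" using x by auto
    have "ennreal (\<bar>Mhat n f x\<bar> powr p) \<le> ennreal (\<integral>s. Hn n x s * \<bar>f s\<bar> powr p \<partial>LI)"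
      by (rule ennreal_leI[OF jensen_Mhat[OF n x0 x1 p f]])
    also have "\<dots> = (\<integral>\<^sup>+ s. ennreal (Hn n x s * \<bar>f s\<bar> powr p) \<partial>LI)"
      by (rule nn_integral_eq_integral[symmetric, OF Hn_int_mult[OF n x0 x1 fpi]])
         (use Hn_nonneg[OF n] x0 x1 in auto)
    also have "\<dots> = (\<integral>\<^sup>+ s. ennreal (Hn n x s) * ennreal (\<bar>f s\<bar> powr p) \<partial>LI)"
      by (intro nn_integral_cong) (use Hn_nonneg[OF n] x0 x1 in \<open>auto simp: ennreal_mult\<close>)
    finally show ?thesis .
  qed
  have meas: "(\<lambda>z. ennreal (Hn n (fst z) (snd z)) * ennreal (\<bar>f (snd z)\<bar> powr p)) \<in> borel_measurable (LI \<Otimes>\<^sub>M LI)"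
    using Hn_meas_pair[of n] fm by measurable
  have "(\<integral>\<^sup>+ x. ennreal (\<bar>Mhat n f x\<bar> powr p) \<partial>LI)
      \<le> (\<integral>\<^sup>+ x. (\<integral>\<^sup>+ s. ennreal (Hn n x s) * ennreal (\<bar>f s\<bar> powr p) \<partial>LI) \<partial>LI)"
    by (rule nn_integral_mono) (rule pt)
  also have "\<dots> = (\<integral>\<^sup>+ s. (\<integral>\<^sup>+ x. ennreal (Hn n x s) * ennreal (\<bar>f s\<bar> powr p) \<partial>LI) \<partial>LI)"
    using P.Fubini'[of "\<lambda>x s. ennreal (Hn n x s) * ennreal (\<bar>f s\<bar> powr p)"] meas
    by (simp add: case_prod_beta')
  also have "\<dots> = (\<integral>\<^sup>+ s. (\<integral>\<^sup>+ x. ennreal (Hn n x s) \<partial>LI) * ennreal (\<bar>f s\<bar> powr p) \<partial>LI)"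
    by (intro nn_integral_cong nn_integral_multc) measurable
  also have "\<dots> \<le> (\<integral>\<^sup>+ s. 2 * ennreal (\<bar>f s\<bar> powr p) \<partial>LI)"
    by (intro nn_integral_mono mult_right_mono Hn_x_int[OF n]) auto
  also have "\<dots> = 2 * (\<integral>\<^sup>+ s. ennreal (\<bar>f s\<bar> powr p) \<partial>LI)"
    by (rule nn_integral_cmult) (use fm in measurable)
  finally show ?thesis .
qed

lemma Mhat_Lp:
  assumes n: "n \<ge> 1" and p: "p \<ge> 1" and f: "Lp_mem p f"
  shows "Lp_mem p (Mhat n f)" "Lp_norm p (Mhat n f) \<le> 2 powr (1 / p) * Lp_norm p f"
proof -
  have fm: "f \<in> borel_measurable LI" using f by (rule Lp_mem_meas)
  have Mm: "Mhat n f \<in> borel_measurable LI" by (rule Mhat_meas[OF n fm])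
  have b: "(\<integral>\<^sup>+ x. ennreal (\<bar>Mhat n f x\<bar> powr p) \<partial>LI) \<le> ennreal (2 * Lp_norm p f powr p)"
    using Mhat_nn_bound[OF n p f] unfolding Lp_nn_eq[OF p f] by (simp add: ennreal_mult)
  show mem: "Lp_mem p (Mhat n f)" using b Mm Lp_mem_nn[OF Mm] by (auto simp: le_less_trans)
  have "Lp_norm p (Mhat n f) powr p \<le> 2 * Lp_norm p f powr p"
    using b unfolding Lp_nn_eq[OF p mem] by (simp add: ennreal_le_iff)
  then have "(Lp_norm p (Mhat n f) powr p) powr (1 / p) \<le> (2 * Lp_norm p f powr p) powr (1 / p)"
    using p by (intro powr_mono2) auto
  then show "Lp_norm p (Mhat n f) \<le> 2 powr (1 / p) * Lp_norm p f"
    using p by (simp add: powr_powr powr_mult Lp_norm_nonneg)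
qed

lemma Mhat_lin:
  assumes n: "n \<ge> 1" and p: "p \<ge> 1" and f1: "Lp_mem p f1" and f2: "Lp_mem p f2" and t: "t \<in> {0..1}"
  shows "Mhat n (\<lambda>s. c * f1 s + d * f2 s) t = c * Mhat n f1 t + d * Mhat n f2 t"
proof (cases "t = 1")
  case True then show ?thesis using Mhat_at1[OF n] by simp
next
  case False
  then have t0: "0 \<le> t" and t1: "t < 1" using t by auto
  have i1: "integrable LI (\<lambda>s. Hn n t s * f1 s)" by (rule Hn_int_mult[OF n t0 t1 Lp_L1[OF p f1]])
  have i2: "integrable LI (\<lambda>s. Hn n t s * f2 s)" by (rule Hn_int_mult[OF n t0 t1 Lp_L1[OF p f2]])
  have "Mhat n (\<lambda>s. c * f1 s + d * f2 s) t = (\<integral>s. c * (Hn n t s * f1 s) + d * (Hn n t s * f2 s) \<partial>LI)"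
    unfolding Mhat_def by (simp add: algebra_simps)
  also have "\<dots> = c * Mhat n f1 t + d * Mhat n f2 t"
    unfolding Mhat_def using i1 i2 by simp
  finally show ?thesis .
qed

theorem theorem6p2:
  fixes p :: real and n N :: nat and xs a b :: "nat \<Rightarrow> real"
    and alpha :: "nat \<Rightarrow> real \<Rightarrow> real" and f :: "real \<Rightarrow> real" and \<Lambda> :: real
  assumes p: "p \<ge> 1"
    and n: "n \<ge> 1"
    and N: "N \<ge> 1"
    and x0: "xs 0 = 0" and xN: "xs N = 1"
    and xmono: "\<forall>i<N. xs i < xs (Suc i)"
    and u: "\<forall>i\<in>{1..N}. a i * 0 + b i = xs (i - 1) \<and> a i * 1 + b i = xs i"
    and alpha: "\<forall>i\<in>{1..N}. Linf_mem (alpha i)"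
    and Lam: "\<Lambda> = (\<Sum>i=1..N. a i * Linf_norm (alpha i) powr p) powr (1 / p)"
    and Lam1: "\<Lambda> < 1"
    and f: "Lp_mem p f"
  shows "(\<forall>g. Lp_mem p g \<longrightarrow> Lp_mem p (Top n N a b alpha f g))
    \<and> (\<forall>g h. Lp_mem p g \<and> Lp_mem p h \<longrightarrow>
          Lp_norm p (\<lambda>y. Top n N a b alpha f g y - Top n N a b alpha f h y)
            \<le> \<Lambda> * Lp_norm p (\<lambda>y. g y - h y))
    \<and> (\<exists>F :: (real \<Rightarrow> real) \<Rightarrow> real \<Rightarrow> real.
         (\<forall>f'. Lp_mem p f' \<longrightarrow>
            Lp_mem p (F f')
            \<and> (AE y in LI. F f' y = Top n N a b alpha f' (F f') y)
            \<and> (\<forall>g. Lp_mem p g \<and> (AE y in LI. g y = Top n N a b alpha f' g y)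
                   \<longrightarrow> (AE y in LI. g y = F f' y)))
         \<and> (\<forall>f1 f2 c d. Lp_mem p f1 \<and> Lp_mem p f2 \<longrightarrow>
              (AE y in LI. F (\<lambda>t. c * f1 t + d * f2 t) y = c * F f1 y + d * F f2 y))
         \<and> (\<exists>C. \<forall>f'. Lp_mem p f' \<longrightarrow> Lp_norm p (F f') \<le> C * Lp_norm p f'))"
proof -
  interpret part2 N xs a b p alpha
    by unfold_locales (use N x0 xN xmono u p alpha in auto)
  have Lam_eq: "\<Lambda> = Lam" using Lam by (simp add: Lam_def)
  show ?thesis unfolding Lam_eq
    by (rule main_assembly[where K="2 powr (1 / p)"])
       (use Lam1 Lam_eq f Mhat_Lp[OF n p] Mhat_lin[OF n p] in auto)
qed

end
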